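(* Let $A$ be a brick gentle algebra. For any string $w\in\mathrm{Str}(A)$ we have $\overline{\{w\}}=\{w\}$. Consequently, every covering relation in $\mathrm{Bic}(A)$ is of the form $(B,B\sqcup\{w\})$ where $w\notin B$ is a string such that $B$ contains exactly one split from each break of $w$.
   Context: $k$ is a field, $A=kQ/I$ with $Q$ a finite connected quiver and $I$ an admissible ideal generated by paths (paths composed right to left). $A$ is gentle if (S1) each vertex has at most two incoming and two outgoing arrows; (S2) for each arrow $\alpha$ there is at most one arrow $\beta$ with $\alpha\beta$ a path not in $I$ and at most one arrow $\gamma$ with $\gamma\alpha$ a path not in $I$; (G1) $I$ is generated by paths of length two; (G2) for each arrow $\alpha$ there is at most one arrow $\beta$ with $\alpha\beta$ a path in $I$ and at most one $\gamma$ with $\gamma\alpha$ a path in $I$. A brick gentle algebra is a gentle algebra all of whose indecomposable finitely generated modules have endomorphism ring a division ring. Strings: for an arrow $\gamma$, $\gamma^{-1}$ is a formal inverse with $s(\gamma^{-1})=t(\gamma)$, $t(\gamma^{-1})=s(\gamma)$. A string of length $d\ge1$ is a word $w=\gamma_d^{\epsilon_d}\cdots\gamma_1^{\epsilon_1}$ ($\gamma_i$ arrows, $\epsilon_i=\pm1$) with $s(\gamma_{i+1}^{\epsilon_{i+1}})=t(\gamma_i^{\epsilon_i})$, $\gamma_{i+1}^{\epsilon_{i+1}}\neq\gamma_i^{-\epsilon_i}$, such that neither $w$ nor $w^{-1}=\gamma_1^{-\epsilon_1}\cdots\gamma_d^{-\epsilon_d}$ contains a subword which is a path lying in $I$; each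 vertex $i$ also gives a length-zero string $e_i$. $\mathrm{Str}(A)$ is the set of strings with $w$ identified with $w^{-1}$. A concatenation of strings $u,v$ is a string of the form $v\gamma u$ or $v\gamma^{-1}u$ with $\gamma$ an arrow (written $v\gamma^{\pm1}u$; $u,v$ may be taken in either orientation). $X\subseteq\mathrm{Str}(A)$ is closed if for all $u,v\in X$ every string which is a concatenation of $u$ and $v$ lies in $X$; $\overline{X}$ is the smallest closed set containing $X$. $B$ is biclosed if $B$ and $\mathrm{Str}(A)\setminus B$ are both closed; $\mathrm{Bic}(A)$ is the set of biclosed sets ordered by inclusion. For $w=\gamma_d^{\epsilon_d}\cdots\gamma_1^{\epsilon_1}$ and $1\le j\le d$, writing $w=w_1\gamma_j^{\epsilon_j}w_2$ (with $w_1,w_2$ strings, possibly of length zero), the pair $\{w_1,w_2\}$ is a break of $w$ and $w_1,w_2$ are splits of $w$. *)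

theory Defs
  imports "Jordan_Normal_Form.Matrix"
begin

text \<open>Bound quiver data: vertex set V, arrow set Arr, source s, target t,
  and Rel, the set of length-two generators of I: (alpha, beta) in Rel means that
  the path alpha beta (first beta, then alpha; t beta = s alpha) lies in I.\<close>

definition composable :: "('a \<Rightarrow> 'v) \<Rightarrow> ('a \<Rightarrow> 'v) \<Rightarrow> 'a \<Rightarrow> 'a \<Rightarrow> bool" where
  "composable s t al be \<longleftrightarrow> t be = s al"

definition is_path :: "'a set \<Rightarrow> ('a \<Rightarrow> 'v) \<Rightarrow> ('a \<Rightarrow> 'v) \<Rightarrow> 'a list \<Rightarrow> bool" where
  "is_path Arr s t p \<longleftrightarrow> p \<noteq> [] \<and> set p \<subseteq> Arr \<and>
     (\<forall>i. Suc i < length p \<longrightarrow> t (p ! i) = s (p ! Suc i))"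

definition path_in_I :: "('a \<times> 'a) set \<Rightarrow> 'a list \<Rightarrow> bool" where
  "path_in_I Rel p \<longleftrightarrow> (\<exists>i. Suc i < length p \<and> (p ! Suc i, p ! i) \<in> Rel)"

definition quiver_connected :: "'v set \<Rightarrow> 'a set \<Rightarrow> ('a \<Rightarrow> 'v) \<Rightarrow> ('a \<Rightarrow> 'v) \<Rightarrow> bool" where
  "quiver_connected V Arr s t \<longleftrightarrow> V \<noteq> {} \<and>
     (\<forall>u\<in>V. \<forall>v\<in>V. (u, v) \<in> ({(s a, t a) | a. a \<in> Arr} \<union> {(t a, s a) | a. a \<in> Arr})\<^sup>*)"

definition bound_quiver :: "'v set \<Rightarrow> 'a set \<Rightarrow> ('a \<Rightarrow> 'v) \<Rightarrow> ('a \<Rightarrow> 'v) \<Rightarrow> ('a \<times> 'a) set \<Rightarrow> bool" where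
  "bound_quiver V Arr s t Rel \<longleftrightarrow> finite V \<and> finite Arr \<and>
     (\<forall>a\<in>Arr. s a \<in> V \<and> t a \<in> V) \<and> quiver_connected V Arr s t \<and>
     (\<forall>(al, be)\<in>Rel. al \<in> Arr \<and> be \<in> Arr \<and> composable s t al be) \<and>
     \<comment> \<open>admissibility: all sufficiently long paths lie in I\<close>
     (\<exists>N. \<forall>p. is_path Arr s t p \<and> length p \<ge> N \<longrightarrow> path_in_I Rel p)"

definition gentle :: "'v set \<Rightarrow> 'a set \<Rightarrow> ('a \<Rightarrow> 'v) \<Rightarrow> ('a \<Rightarrow> 'v) \<Rightarrow> ('a \<times> 'a) set \<Rightarrow> bool" where
  "gentle V Arr s t Rel \<longleftrightarrow> bound_quiver V Arr s t Rel \<and>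
     \<comment> \<open>S1\<close>
     (\<forall>v\<in>V. card {a\<in>Arr. t a = v} \<le> 2 \<and> card {a\<in>Arr. s a = v} \<le> 2) \<and>
     \<comment> \<open>S2\<close>
     (\<forall>al\<in>Arr. (\<forall>b1\<in>Arr. \<forall>b2\<in>Arr. composable s t al b1 \<and> (al, b1) \<notin> Rel \<and>
                  composable s t al b2 \<and> (al, b2) \<notin> Rel \<longrightarrow> b1 = b2) \<and>
                (\<forall>g1\<in>Arr. \<forall>g2\<in>Arr. composable s t g1 al \<and> (g1, al) \<notin> Rel \<and>
                  composable s t g2 al \<and> (g2, al) \<notin> Rel \<longrightarrow> g1 = g2)) \<and>
     \<comment> \<open>G2 (G1 is built into the presentation by length-two generators Rel)\<close>
     (\<forall>al\<in>Arr. (\<forall>b1 b2. (al, b1) \<in> Rel \<and> (al, b2) \<in> Rel \<longrightarrow> b1 = b2) \<and>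
                (\<forall>g1 g2. (g1, al) \<in> Rel \<and> (g2, al) \<in> Rel \<longrightarrow> g1 = g2))"

definition is_rep :: "'v set \<Rightarrow> 'a set \<Rightarrow> ('a \<Rightarrow> 'v) \<Rightarrow> ('a \<Rightarrow> 'v) \<Rightarrow> ('a \<times> 'a) set \<Rightarrow>
    ('v \<Rightarrow> nat) \<Rightarrow> ('a \<Rightarrow> 'k::field mat) \<Rightarrow> bool" where
  "is_rep V Arr s t Rel d M \<longleftrightarrow>
     (\<forall>a\<in>Arr. M a \<in> carrier_mat (d (t a)) (d (s a))) \<and>
     (\<forall>(al, be)\<in>Rel. M al * M be = 0\<^sub>m (d (t al)) (d (s be)))"

definition is_endo :: "'v set \<Rightarrow> 'a set \<Rightarrow> ('a \<Rightarrow> 'v) \<Rightarrow> ('a \<Rightarrow> 'v) \<Rightarrow>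
    ('v \<Rightarrow> nat) \<Rightarrow> ('a \<Rightarrow> 'k::field mat) \<Rightarrow> ('v \<Rightarrow> 'k mat) \<Rightarrow> bool" where
  "is_endo V Arr s t d M f \<longleftrightarrow>
     (\<forall>v\<in>V. f v \<in> carrier_mat (d v) (d v)) \<and>
     (\<forall>a\<in>Arr. f (t a) * M a = M a * f (s a))"

definition indecomposable_rep :: "'v set \<Rightarrow> 'a set \<Rightarrow> ('a \<Rightarrow> 'v) \<Rightarrow> ('a \<Rightarrow> 'v) \<Rightarrow>
    ('v \<Rightarrow> nat) \<Rightarrow> ('a \<Rightarrow> 'k::field mat) \<Rightarrow> bool" where
  "indecomposable_rep V Arr s t d M \<longleftrightarrow> (\<exists>v\<in>V. d v > 0) \<and>
     (\<forall>e. is_endo V Arr s t d M e \<and> (\<forall>v\<in>V. e v * e v = e v) \<longrightarrow>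
        (\<forall>v\<in>V. e v = 0\<^sub>m (d v) (d v)) \<or> (\<forall>v\<in>V. e v = 1\<^sub>m (d v)))"

definition endo_division :: "'v set \<Rightarrow> 'a set \<Rightarrow> ('a \<Rightarrow> 'v) \<Rightarrow> ('a \<Rightarrow> 'v) \<Rightarrow>
    ('v \<Rightarrow> nat) \<Rightarrow> ('a \<Rightarrow> 'k::field mat) \<Rightarrow> bool" where
  "endo_division V Arr s t d M \<longleftrightarrow>
     (\<forall>f. is_endo V Arr s t d M f \<and> (\<exists>v\<in>V. f v \<noteq> 0\<^sub>m (d v) (d v)) \<longrightarrow>
        (\<exists>g. is_endo V Arr s t d M g \<and> (\<forall>v\<in>V. f v * g v = 1\<^sub>m (d v) \<and> g v * f v = 1\<^sub>m (d v))))"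

definition brick_gentle :: "'k::field itself \<Rightarrow> 'v set \<Rightarrow> 'a set \<Rightarrow> ('a \<Rightarrow> 'v) \<Rightarrow> ('a \<Rightarrow> 'v) \<Rightarrow>
    ('a \<times> 'a) set \<Rightarrow> bool" where
  "brick_gentle TYPE('k) V Arr s t Rel \<longleftrightarrow> gentle V Arr s t Rel \<and>
     (\<forall>d (M :: 'a \<Rightarrow> 'k mat). is_rep V Arr s t Rel d M \<and> indecomposable_rep V Arr s t d M \<longrightarrow>
        endo_division V Arr s t d M)"

text \<open>A letter (a, True) is the arrow a, (a, False) is its formal inverse.
  A raw string is either the trivial string at a vertex, or a nonempty list of
  letters [l1, ..., ld] in order of application (w = ld ... l1).\<close>

datatype ('v, 'a) rawstr = Triv 'v | Word "('a \<times> bool) list"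

definition lsrc :: "('a \<Rightarrow> 'v) \<Rightarrow> ('a \<Rightarrow> 'v) \<Rightarrow> 'a \<times> bool \<Rightarrow> 'v" where
  "lsrc s t l = (if snd l then s (fst l) else t (fst l))"

definition ltgt :: "('a \<Rightarrow> 'v) \<Rightarrow> ('a \<Rightarrow> 'v) \<Rightarrow> 'a \<times> bool \<Rightarrow> 'v" where
  "ltgt s t l = (if snd l then t (fst l) else s (fst l))"

fun letters :: "('v, 'a) rawstr \<Rightarrow> ('a \<times> bool) list" where
  "letters (Triv v) = []"
| "letters (Word ls) = ls"

fun str_src :: "('a \<Rightarrow> 'v) \<Rightarrow> ('a \<Rightarrow> 'v) \<Rightarrow> ('v, 'a) rawstr \<Rightarrow> 'v" where
  "str_src s t (Triv v) = v"
| "str_src s t (Word ls) = lsrc s t (hd ls)"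

fun str_tgt :: "('a \<Rightarrow> 'v) \<Rightarrow> ('a \<Rightarrow> 'v) \<Rightarrow> ('v, 'a) rawstr \<Rightarrow> 'v" where
  "str_tgt s t (Triv v) = v"
| "str_tgt s t (Word ls) = ltgt s t (last ls)"

fun inv_str :: "('v, 'a) rawstr \<Rightarrow> ('v, 'a) rawstr" where
  "inv_str (Triv v) = Triv v"
| "inv_str (Word ls) = Word (rev (map (\<lambda>(a, b). (a, \<not> b)) ls))"

definition is_string :: "'v set \<Rightarrow> 'a set \<Rightarrow> ('a \<Rightarrow> 'v) \<Rightarrow> ('a \<Rightarrow> 'v) \<Rightarrow> ('a \<times> 'a) set \<Rightarrow>
    ('v, 'a) rawstr \<Rightarrow> bool" where
  "is_string V Arr s t Rel w \<longleftrightarrow> (case w of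
      Triv v \<Rightarrow> v \<in> V
    | Word ls \<Rightarrow> ls \<noteq> [] \<and> fst ` set ls \<subseteq> Arr \<and>
        (\<forall>i. Suc i < length ls \<longrightarrow>
           lsrc s t (ls ! Suc i) = ltgt s t (ls ! i) \<and>
           ls ! Suc i \<noteq> (fst (ls ! i), \<not> snd (ls ! i)) \<and>
           \<comment> \<open>no subword of w that is a path in I\<close>
           \<not> (snd (ls ! i) \<and> snd (ls ! Suc i) \<and> (fst (ls ! Suc i), fst (ls ! i)) \<in> Rel) \<and>
           \<comment> \<open>no subword of w inverse that is a path in I\<close>
           \<not> (\<not> snd (ls ! i) \<and> \<not> snd (ls ! Suc i) \<and> (fst (ls ! i), fst (ls ! Suc i)) \<in> Rel)))"

definition str_class :: "('v, 'a) rawstr \<Rightarrow> ('v, 'a) rawstr set" where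
  "str_class w = {w, inv_str w}"

definition Str :: "'v set \<Rightarrow> 'a set \<Rightarrow> ('a \<Rightarrow> 'v) \<Rightarrow> ('a \<Rightarrow> 'v) \<Rightarrow> ('a \<times> 'a) set \<Rightarrow>
    ('v, 'a) rawstr set set" where
  "Str V Arr s t Rel = str_class ` {w. is_string V Arr s t Rel w}"

text \<open>x is a concatenation v gamma^{+-1} u of the raw strings u and v.\<close>
definition raw_concat :: "'v set \<Rightarrow> 'a set \<Rightarrow> ('a \<Rightarrow> 'v) \<Rightarrow> ('a \<Rightarrow> 'v) \<Rightarrow> ('a \<times> 'a) set \<Rightarrow>
    ('v, 'a) rawstr \<Rightarrow> ('v, 'a) rawstr \<Rightarrow> ('v, 'a) rawstr \<Rightarrow> bool" where
  "raw_concat V Arr s t Rel x u v \<longleftrightarrow> is_string V Arr s t Rel x \<and>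
     is_string V Arr s t Rel u \<and> is_string V Arr s t Rel v \<and>
     (\<exists>l. fst l \<in> Arr \<and> lsrc s t l = str_tgt s t u \<and> ltgt s t l = str_src s t v \<and>
          x = Word (letters u @ [l] @ letters v))"

definition is_concat :: "'v set \<Rightarrow> 'a set \<Rightarrow> ('a \<Rightarrow> 'v) \<Rightarrow> ('a \<Rightarrow> 'v) \<Rightarrow> ('a \<times> 'a) set \<Rightarrow>
    ('v, 'a) rawstr set \<Rightarrow> ('v, 'a) rawstr set \<Rightarrow> ('v, 'a) rawstr set \<Rightarrow> bool" where
  "is_concat V Arr s t Rel c a b \<longleftrightarrow>
     (\<exists>x\<in>c. \<exists>u\<in>a. \<exists>v\<in>b. raw_concat V Arr s t Rel x u v)"

definition str_closed :: "'v set \<Rightarrow> 'a set \<Rightarrow> ('a \<Rightarrow> 'v) \<Rightarrow> ('a \<Rightarrow> 'v) \<Rightarrow> ('a \<times> 'a) set \<Rightarrow>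
    ('v, 'a) rawstr set set \<Rightarrow> bool" where
  "str_closed V Arr s t Rel X \<longleftrightarrow>
     (\<forall>a\<in>X. \<forall>b\<in>X. \<forall>c\<in>Str V Arr s t Rel. is_concat V Arr s t Rel c a b \<longrightarrow> c \<in> X)"

definition str_closure :: "'v set \<Rightarrow> 'a set \<Rightarrow> ('a \<Rightarrow> 'v) \<Rightarrow> ('a \<Rightarrow> 'v) \<Rightarrow> ('a \<times> 'a) set \<Rightarrow>
    ('v, 'a) rawstr set set \<Rightarrow> ('v, 'a) rawstr set set" where
  "str_closure V Arr s t Rel X =
     \<Inter>{Y. X \<subseteq> Y \<and> Y \<subseteq> Str V Arr s t Rel \<and> str_closed V Arr s t Rel Y}"

definition biclosed :: "'v set \<Rightarrow> 'a set \<Rightarrow> ('a \<Rightarrow> 'v) \<Rightarrow> ('a \<Rightarrow> 'v) \<Rightarrow> ('a \<times> 'a) set \<Rightarrow>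
    ('v, 'a) rawstr set set \<Rightarrow> bool" where
  "biclosed V Arr s t Rel B \<longleftrightarrow> B \<subseteq> Str V Arr s t Rel \<and> str_closed V Arr s t Rel B \<and>
     str_closed V Arr s t Rel (Str V Arr s t Rel - B)"

definition bic_covers :: "'v set \<Rightarrow> 'a set \<Rightarrow> ('a \<Rightarrow> 'v) \<Rightarrow> ('a \<Rightarrow> 'v) \<Rightarrow> ('a \<times> 'a) set \<Rightarrow>
    ('v, 'a) rawstr set set \<Rightarrow> ('v, 'a) rawstr set set \<Rightarrow> bool" where
  "bic_covers V Arr s t Rel B B' \<longleftrightarrow> biclosed V Arr s t Rel B \<and> biclosed V Arr s t Rel B' \<and>
     B \<subset> B' \<and> \<not> (\<exists>C. biclosed V Arr s t Rel C \<and> B \<subset> C \<and> C \<subset> B')"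

text \<open>Splits of a raw string with letters [l1,...,ld] at position j (1 \<le> j \<le> d):
  w = w1 lj w2, with w2 = l_{j-1}...l_1 and w1 = l_d ... l_{j+1}
  (trivial strings at the appropriate vertex when empty).\<close>
definition split_low :: "('a \<Rightarrow> 'v) \<Rightarrow> ('a \<Rightarrow> 'v) \<Rightarrow> ('a \<times> bool) list \<Rightarrow> nat \<Rightarrow> ('v, 'a) rawstr" where
  "split_low s t ls j = (if j = 1 then Triv (lsrc s t (ls ! 0)) else Word (take (j - 1) ls))"

definition split_high :: "('a \<Rightarrow> 'v) \<Rightarrow> ('a \<Rightarrow> 'v) \<Rightarrow> ('a \<times> bool) list \<Rightarrow> nat \<Rightarrow> ('v, 'a) rawstr" where
  "split_high s t ls j = (if j = length ls then Triv (ltgt s t (last ls)) else Word (drop j ls))"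

definition breaks :: "('a \<Rightarrow> 'v) \<Rightarrow> ('a \<Rightarrow> 'v) \<Rightarrow> ('v, 'a) rawstr \<Rightarrow>
    (('v, 'a) rawstr set \<times> ('v, 'a) rawstr set) set" where
  "breaks s t w = {(str_class (split_high s t (letters w) j), str_class (split_low s t (letters w) j)) | j.
                    1 \<le> j \<and> j \<le> length (letters w)}"

end

theory Submission
  imports Defs
begin

definition lflip :: "'a \<times> bool \<Rightarrow> 'a \<times> bool" where
  "lflip c = (fst c, \<not> snd c)"

lemma lflip_simps[simp]: "fst (lflip c) = fst c" "snd (lflip c) = (\<not> snd c)" "lflip (lflip c) = c"
  by (auto simp: lflip_def)

lemma lflip_eq_iff[simp]: "lflip c = lflip d \<longleftrightarrow> c = d"
  by (metis lflip_simps(3))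

lemma lflip_neq[simp]: "lflip c \<noteq> c" "c \<noteq> lflip c"
  by (auto simp: lflip_def prod_eq_iff)

lemma lsrc_lflip[simp]: "lsrc s t (lflip c) = ltgt s t c" and ltgt_lflip[simp]: "ltgt s t (lflip c) = lsrc s t c"
  by (auto simp: lsrc_def ltgt_def lflip_def)

lemma flip_lam: "(\<lambda>(a, b). (a, \<not> b)) = lflip"
  by (auto simp: lflip_def fun_eq_iff)

definition adj_ok :: "('a \<Rightarrow> 'v) \<Rightarrow> ('a \<Rightarrow> 'v) \<Rightarrow> ('a \<times> 'a) set \<Rightarrow> 'a \<times> bool \<Rightarrow> 'a \<times> bool \<Rightarrow> bool" where
  "adj_ok s t Rel c1 c2 \<longleftrightarrow> lsrc s t c2 = ltgt s t c1 \<and> c2 \<noteq> lflip c1 \<and>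
     \<not> (snd c1 \<and> snd c2 \<and> (fst c2, fst c1) \<in> Rel) \<and>
     \<not> (\<not> snd c1 \<and> \<not> snd c2 \<and> (fst c1, fst c2) \<in> Rel)"

lemma is_string_Word:
  "is_string V Arr s t Rel (Word ls) \<longleftrightarrow> ls \<noteq> [] \<and> fst ` set ls \<subseteq> Arr \<and> successively (adj_ok s t Rel) ls"
  unfolding is_string_def successively_conv_nth adj_ok_def lflip_def by auto

lemma is_string_Triv: "is_string V Arr s t Rel (Triv v) \<longleftrightarrow> v \<in> V"
  by (simp add: is_string_def)

lemma adj_ok_flip: "adj_ok s t Rel c1 c2 \<Longrightarrow> adj_ok s t Rel (lflip c2) (lflip c1)"
  unfolding adj_ok_def lflip_def lsrc_def ltgt_def by (auto simp: prod_eq_iff split: if_splits)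

lemma inv_str_Word: "inv_str (Word ls) = Word (rev (map lflip ls))"
  by (simp add: flip_lam)

lemma inv_inv_str[simp]: "inv_str (inv_str w) = w"
  by (cases w) (simp_all add: flip_lam rev_map comp_def)

lemma letters_inv_str: "letters (inv_str w) = rev (map lflip (letters w))"
  by (cases w) (simp_all add: flip_lam)

lemma is_string_inv:
  assumes "is_string V Arr s t Rel w" shows "is_string V Arr s t Rel (inv_str w)"
proof (cases w)
  case (Triv x1) then show ?thesis using assms by simp
next
  case (Word ls)
  have "successively (adj_ok s t Rel) ls" using assms Word by (simp add: is_string_Word)
  then have "successively (\<lambda>x y. adj_ok s t Rel (lflip y) (lflip x)) ls"
    by (rule successively_mono) (simp add: adj_ok_flip)
  then show ?thesis using assms Word
    by (auto simp: is_string_Word flip_lam successively_map image_image)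
qed

lemma str_class_inv[simp]: "str_class (inv_str w) = str_class w"
  by (auto simp: str_class_def)

lemma Str_memI: "is_string V Arr s t Rel w \<Longrightarrow> str_class w \<in> Str V Arr s t Rel"
  by (simp add: Str_def)

lemma Str_mem_cases:
  assumes "c \<in> Str V Arr s t Rel" "u \<in> c"
  shows "c = str_class u" "is_string V Arr s t Rel u"
proof -
  obtain w where w: "is_string V Arr s t Rel w" "c = str_class w" using assms by (auto simp: Str_def)
  then have "u = w \<or> u = inv_str w" using assms by (auto simp: str_class_def)
  then show "c = str_class u" "is_string V Arr s t Rel u" using w is_string_inv by auto
qed



locale smod =
  fixes V :: "'v set" and Arr :: "'a set" and s t :: "'a \<Rightarrow> 'v" and Rel :: "('a \<times> 'a) set"
    and ls :: "('a \<times> bool) list"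
  assumes ends: "\<And>a. a \<in> Arr \<Longrightarrow> s a \<in> V \<and> t a \<in> V"
    and str: "is_string V Arr s t Rel (Word ls)"
begin

lemma ls_ne: "ls \<noteq> []" and arrs: "i < length ls \<Longrightarrow> fst (ls ! i) \<in> Arr"
  and adj: "Suc i < length ls \<Longrightarrow> adj_ok s t Rel (ls ! i) (ls ! Suc i)"
  using str by (auto simp: is_string_Word successively_conv_nth)

lemma adj_src: "Suc i < length ls \<Longrightarrow> lsrc s t (ls ! Suc i) = ltgt s t (ls ! i)"
  and adj_nb: "Suc i < length ls \<Longrightarrow> ls ! Suc i \<noteq> lflip (ls ! i)"
  using adj unfolding adj_ok_def by auto

definition sym :: "nat \<Rightarrow> bool \<Rightarrow> nat \<Rightarrow> ('a \<times> bool) option" where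
  "sym i dr m = (if dr then (if i + m < length ls then Some (ls ! (i + m)) else None)
                 else (if m < i then Some (lflip (ls ! (i - m - 1))) else None))"

definition np :: "nat \<Rightarrow> bool \<Rightarrow> nat" where
  "np i dr = (if dr then Suc i else i - 1)"

definition adv :: "nat \<Rightarrow> bool \<Rightarrow> nat \<Rightarrow> nat" where
  "adv i dr m = (if dr then i + m else i - m)"

definition p :: "nat \<Rightarrow> 'v" where
  "p i = (if i < length ls then lsrc s t (ls ! i) else ltgt s t (ls ! (length ls - 1)))"

lemma p_prev: "0 < i \<Longrightarrow> i \<le> length ls \<Longrightarrow> p i = ltgt s t (ls ! (i - 1))"
  using adj_src[of "i - 1"] by (cases "i < length ls") (auto simp: p_def)

lemma sym_p: "i \<le> length ls \<Longrightarrow> sym i dr 0 = Some c \<Longrightarrow> p i = lsrc s t c"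
proof (cases dr)
  case True
  then show "sym i dr 0 = Some c \<Longrightarrow> ?thesis" by (auto simp: sym_def p_def split: if_splits)
next
  case False
  then show "i \<le> length ls \<Longrightarrow> sym i dr 0 = Some c \<Longrightarrow> ?thesis"
    using p_prev[of i] by (auto simp: sym_def split: if_splits)
qed

lemma sym_np: "i \<le> length ls \<Longrightarrow> sym i dr 0 = Some c \<Longrightarrow> np i dr \<le> length ls \<and> p (np i dr) = ltgt s t c"
proof (cases dr)
  case True
  then show "sym i dr 0 = Some c \<Longrightarrow> ?thesis" using p_prev[of "Suc i"] by (auto simp: sym_def np_def split: if_splits)
next
  case False
  then show "i \<le> length ls \<Longrightarrow> sym i dr 0 = Some c \<Longrightarrow> ?thesis"
    by (auto simp: sym_def np_def p_def split: if_splits)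
qed

lemma sym_arr: "i \<le> length ls \<Longrightarrow> sym i dr m = Some c \<Longrightarrow> fst c \<in> Arr"
  by (auto simp: sym_def arrs split: if_splits)

lemma NB: "i \<le> length ls \<Longrightarrow> sym i True 0 = Some c \<Longrightarrow> sym i False 0 \<noteq> Some c"
  using adj_nb[of "i - 1"] by (auto simp: sym_def split: if_splits)

lemma NB': "i \<le> length ls \<Longrightarrow> sym i dr 0 = Some c \<Longrightarrow> sym i (\<not> dr) 0 \<noteq> Some c"
  using NB[of i c] by (cases dr) auto

lemma sym_back: "i \<le> length ls \<Longrightarrow> sym i dr 0 = Some c \<Longrightarrow> sym (np i dr) (\<not> dr) 0 = Some (lflip c)"
  by (auto simp: sym_def np_def split: if_splits)

lemma np_back: "sym i dr 0 = Some c \<Longrightarrow> np (np i dr) (\<not> dr) = i"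
  by (auto simp: sym_def np_def split: if_splits)

lemma sym_shift: "sym i dr (Suc m) = sym (np i dr) dr m"
  by (auto simp: sym_def np_def)

lemma sym_adv: "sym (adv i dr m) dr 0 = sym i dr m"
  by (auto simp: sym_def adv_def)

lemma adv_0[simp]: "adv i dr 0 = i" and adv_Suc: "adv i dr (Suc m) = np (adv i dr m) dr"
  by (auto simp: adv_def np_def)

lemma sym_None_mono: "sym i dr m = None \<Longrightarrow> m \<le> m' \<Longrightarrow> sym i dr m' = None"
  by (auto simp: sym_def split: if_splits)

lemma adv_le: "i \<le> length ls \<Longrightarrow> adv i dr m \<le> length ls \<or> sym i dr m = None"
  by (auto simp: sym_def adv_def)

definition mv :: "'a \<Rightarrow> nat \<Rightarrow> nat option" where
  "mv a i = (if sym i True 0 = Some (a, True) then Some (Suc i)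
             else if sym i False 0 = Some (a, True) then Some (i - 1) else None)"

definition mvinv :: "'a \<Rightarrow> nat \<Rightarrow> nat option" where
  "mvinv a i = (if sym i True 0 = Some (a, False) then Some (Suc i)
             else if sym i False 0 = Some (a, False) then Some (i - 1) else None)"

lemma mv_iff: "i \<le> length ls \<Longrightarrow> mv a i = Some k \<longleftrightarrow> (\<exists>dr. sym i dr 0 = Some (a, True) \<and> k = np i dr)"
  using NB[of i "(a, True)"] unfolding mv_def np_def
  by (auto split: if_splits)

lemma mvinv_iff: "i \<le> length ls \<Longrightarrow> mvinv a i = Some k \<longleftrightarrow> (\<exists>dr. sym i dr 0 = Some (a, False) \<and> k = np i dr)"
  using NB[of i "(a, False)"] unfolding mvinv_def np_def
  by (auto split: if_splits)

lemma mv_None: "mv a i = None \<longleftrightarrow> (\<forall>dr. sym i dr 0 \<noteq> Some (a, True))"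
  unfolding mv_def all_bool_eq by (auto split: if_splits)

lemma mvinv_None: "mvinv a i = None \<longleftrightarrow> (\<forall>dr. sym i dr 0 \<noteq> Some (a, False))"
  unfolding mvinv_def all_bool_eq by (auto split: if_splits)

lemma mv_props: "i \<le> length ls \<Longrightarrow> mv a i = Some k \<Longrightarrow> k \<le> length ls \<and> p i = s a \<and> p k = t a \<and> a \<in> Arr"
  using sym_np sym_p sym_arr by (fastforce simp: mv_iff lsrc_def ltgt_def)

lemma mvinv_props: "k \<le> length ls \<Longrightarrow> mvinv a k = Some j \<Longrightarrow> j \<le> length ls \<and> p j = s a \<and> p k = t a \<and> a \<in> Arr"
  using sym_np sym_p sym_arr by (fastforce simp: mvinv_iff lsrc_def ltgt_def)

lemma mv_mvinv: "i \<le> length ls \<Longrightarrow> mv a i = Some k \<Longrightarrow> mvinv a k = Some i"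
proof -
  assume i: "i \<le> length ls" and m: "mv a i = Some k"
  then obtain dr where dr: "sym i dr 0 = Some (a, True)" "k = np i dr" by (auto simp: mv_iff)
  have "k \<le> length ls" using sym_np[OF i dr(1)] dr by simp
  moreover have "sym k (\<not> dr) 0 = Some (a, False)" using sym_back[OF i dr(1)] dr by (simp add: lflip_def)
  moreover have "np k (\<not> dr) = i" using np_back[OF dr(1)] dr by simp
  ultimately show ?thesis by (auto simp: mvinv_iff)
qed

lemma mvinv_mv: "k \<le> length ls \<Longrightarrow> mvinv a k = Some i \<Longrightarrow> mv a i = Some k"
proof -
  assume i: "k \<le> length ls" and m: "mvinv a k = Some i"
  then obtain dr where dr: "sym k dr 0 = Some (a, False)" "i = np k dr" by (auto simp: mvinv_iff)
  have "i \<le> length ls" using sym_np[OF i dr(1)] dr by simp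
  moreover have "sym i (\<not> dr) 0 = Some (a, True)" using sym_back[OF i dr(1)] dr by (simp add: lflip_def)
  moreover have "np i (\<not> dr) = k" using np_back[OF dr(1)] dr by simp
  ultimately show ?thesis by (auto simp: mv_iff)
qed

lemma no_rel_path:
  assumes i: "i \<le> length ls" and m1: "mv be i = Some j" and m2: "mv al j = Some k" and r: "(al, be) \<in> Rel"
  shows False
proof -
  obtain dr where dr: "sym i dr 0 = Some (be, True)" "j = np i dr" using m1 i by (auto simp: mv_iff)
  have j: "j \<le> length ls" using sym_np[OF i dr(1)] dr by simp
  obtain dr' where dr': "sym j dr' 0 = Some (al, True)" "k = np j dr'" using m2 j by (auto simp: mv_iff)
  have "sym j (\<not> dr) 0 = Some (be, False)" using sym_back[OF i dr(1)] dr by (simp add: lflip_def)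
  then have "dr' = dr" using dr' by (cases dr; cases dr') auto
  show False
  proof (cases dr)
    case True
    then have "ls ! i = (be, True)" "ls ! Suc i = (al, True)" "Suc i < length ls"
      using dr dr' \<open>dr' = dr\<close> by (auto simp: sym_def np_def split: if_splits)
    then show False using adj[of i] r unfolding adj_ok_def by auto
  next
    case False
    then have "ls ! (i - 1) = (be, False)" "ls ! (i - 2) = (al, False)" "1 < i"
      using dr dr' \<open>dr' = dr\<close> by (auto simp: sym_def np_def lflip_def prod_eq_iff numeral_2_eq_2 split: if_splits)
    moreover have "Suc (i - 2) = i - 1" using \<open>1 < i\<close> by simp
    moreover have "Suc (i - 2) < length ls" using \<open>1 < i\<close> i by simp
    ultimately show False using adj[of "i - 2"] r unfolding adj_ok_def by auto
  qed
qed

end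


definition optF :: "nat option \<Rightarrow> (nat \<Rightarrow> 'k::zero) \<Rightarrow> 'k" where
  "optF ox g = (case ox of None \<Rightarrow> 0 | Some x \<Rightarrow> g x)"

lemma optF_simps[simp]: "optF None g = 0" "optF (Some x) g = g x"
  by (auto simp: optF_def)

definition key :: "('a \<times> bool) option \<Rightarrow> nat" where
  "key ox = (case ox of None \<Rightarrow> 1 | Some c \<Rightarrow> (if snd c then 2 else 0))"

definition hlt :: "(nat \<Rightarrow> ('a \<times> bool) option) \<Rightarrow> (nat \<Rightarrow> ('a \<times> bool) option) \<Rightarrow> bool" where
  "hlt h h' \<longleftrightarrow> (\<exists>m. (\<forall>m'<m. h m' = h' m') \<and> key (h m) > key (h' m))"

definition hle :: "(nat \<Rightarrow> ('a \<times> bool) option) \<Rightarrow> (nat \<Rightarrow> ('a \<times> bool) option) \<Rightarrow> bool" where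
  "hle h h' \<longleftrightarrow> h = h' \<or> hlt h h'"

lemma hlt_irrefl: "\<not> hlt h h"
  by (auto simp: hlt_def)

lemma hlt_trans: assumes "hlt h1 h2" "hlt h2 h3" shows "hlt h1 h3"
proof -
  obtain m1 where m1: "\<forall>m'<m1. h1 m' = h2 m'" "key (h1 m1) > key (h2 m1)" using assms(1) by (auto simp: hlt_def)
  obtain m2 where m2: "\<forall>m'<m2. h2 m' = h3 m'" "key (h2 m2) > key (h3 m2)" using assms(2) by (auto simp: hlt_def)
  consider "m1 < m2" | "m2 < m1" | "m1 = m2" by linarith
  then show ?thesis
  proof cases
    case 1 then show ?thesis using m1 m2 unfolding hlt_def by (intro exI[of _ m1]) auto
  next
    case 2 then show ?thesis using m1 m2 unfolding hlt_def by (intro exI[of _ m2]) auto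
  next
    case 3 then show ?thesis using m1 m2 unfolding hlt_def by (intro exI[of _ m1]) auto
  qed
qed

lemma hle_trans: "hle h1 h2 \<Longrightarrow> hle h2 h3 \<Longrightarrow> hle h1 h3"
  unfolding hle_def using hlt_trans by blast

lemma hle_hlt_trans: "hle h1 h2 \<Longrightarrow> hlt h2 h3 \<Longrightarrow> hlt h1 h3"
  unfolding hle_def using hlt_trans by blast

lemma hlt_hle_trans: "hlt h1 h2 \<Longrightarrow> hle h2 h3 \<Longrightarrow> hlt h1 h3"
  unfolding hle_def using hlt_trans by blast

lemma hle_antisym: "hle h1 h2 \<Longrightarrow> hle h2 h1 \<Longrightarrow> h1 = h2"
  unfolding hle_def using hlt_trans hlt_irrefl by blast

context smod begin

definition Pset :: "'v \<Rightarrow> nat set" where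
  "Pset v = {i. i \<le> length ls \<and> p i = v}"

lemma finite_Pset[simp]: "finite (Pset v)"
  by (simp add: Pset_def)

definition PC :: "(nat \<Rightarrow> nat \<Rightarrow> 'k::zero) \<Rightarrow> bool" where
  "PC F \<longleftrightarrow> (\<forall>a i k. a \<in> Arr \<longrightarrow> i \<le> length ls \<longrightarrow> k \<le> length ls \<longrightarrow> p i = s a \<longrightarrow> p k = t a \<longrightarrow>
      optF (mv a i) (F k) = optF (mvinv a k) (\<lambda>j. F j i))"

definition prec :: "nat \<Rightarrow> nat \<Rightarrow> bool" where
  "prec i j \<longleftrightarrow> (\<exists>dl. hle (sym i dl) (sym j True) \<and> hle (sym i (\<not> dl)) (sym j False) \<and>
      (hlt (sym i dl) (sym j True) \<or> hlt (sym i (\<not> dl)) (sym j False)))"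

lemma prec_irrefl: "\<not> prec i i"
proof
  assume "prec i i"
  then obtain dl where dl: "hle (sym i dl) (sym i True)" "hle (sym i (\<not> dl)) (sym i False)"
    "hlt (sym i dl) (sym i True) \<or> hlt (sym i (\<not> dl)) (sym i False)" by (auto simp: prec_def)
  show False
  proof (cases dl)
    case True then show False using dl hlt_irrefl by auto
  next
    case False
    then have "sym i False = sym i True" using dl hle_antisym by auto
    then show False using dl False hlt_irrefl by auto
  qed
qed

lemma prec_trans: assumes "prec i j" "prec j k" shows "prec i k"
proof -
  obtain d1 where d1: "hle (sym i d1) (sym j True)" "hle (sym i (\<not> d1)) (sym j False)"
    "hlt (sym i d1) (sym j True) \<or> hlt (sym i (\<not> d1)) (sym j False)" using assms(1) by (auto simp: prec_def)
  obtain d2 where d2: "hle (sym j d2) (sym k True)" "hle (sym j (\<not> d2)) (sym k False)"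
    "hlt (sym j d2) (sym k True) \<or> hlt (sym j (\<not> d2)) (sym k False)" using assms(2) by (auto simp: prec_def)
  show ?thesis
  proof (cases d2)
    case True
    then have a: "hle (sym j True) (sym k True)" "hle (sym j False) (sym k False)"
      "hlt (sym j True) (sym k True) \<or> hlt (sym j False) (sym k False)" using d2 by auto
    have "hle (sym i d1) (sym k True)" using d1(1) a(1) by (rule hle_trans)
    moreover have "hle (sym i (\<not> d1)) (sym k False)" using d1(2) a(2) by (rule hle_trans)
    moreover have "hlt (sym i d1) (sym k True) \<or> hlt (sym i (\<not> d1)) (sym k False)"
      using d1 a hle_hlt_trans hlt_hle_trans by blast
    ultimately show ?thesis unfolding prec_def by blast
  next
    case False
    then have a: "hle (sym j False) (sym k True)" "hle (sym j True) (sym k False)"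
      "hlt (sym j False) (sym k True) \<or> hlt (sym j True) (sym k False)" using d2 by auto
    have "hle (sym i (\<not> d1)) (sym k True)" using d1(2) a(1) by (rule hle_trans)
    moreover have "hle (sym i (\<not> \<not> d1)) (sym k False)" using d1(1) a(2) by (simp add: hle_trans)
    moreover have "hlt (sym i (\<not> d1)) (sym k True) \<or> hlt (sym i (\<not> \<not> d1)) (sym k False)"
      using d1 a hle_hlt_trans hlt_hle_trans by auto
    ultimately show ?thesis unfolding prec_def by blast
  qed
qed

lemma D1:
  assumes PC: "PC F" and i: "i \<le> length ls" and j: "j \<le> length ls" and pij: "p i = p j"
    and F: "F j i \<noteq> 0" and y: "sym j dr 0 = Some (a, True)"
  shows "\<exists>dr'. sym i dr' 0 = Some (a, True) \<and> F (np j dr) (np i dr') = F j i"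
proof -
  have mj: "mv a j = Some (np j dr)" using y j by (auto simp: mv_iff)
  have k: "np j dr \<le> length ls" "p j = s a" "p (np j dr) = t a" "a \<in> Arr" using mv_props[OF j mj] by auto
  have mi: "mvinv a (np j dr) = Some j" using mv_mvinv[OF j mj] .
  have "optF (mv a i) (F (np j dr)) = optF (mvinv a (np j dr)) (\<lambda>j'. F j' i)"
    using PC k i pij unfolding PC_def by auto
  then have eq: "optF (mv a i) (F (np j dr)) = F j i" using mi by simp
  then obtain i' where i': "mv a i = Some i'" using F by (cases "mv a i") auto
  then obtain dr' where "sym i dr' 0 = Some (a, True)" "i' = np i dr'" using i by (auto simp: mv_iff)
  then show ?thesis using eq i' by auto
qed

lemma D2:
  assumes PC: "PC F" and i: "i \<le> length ls" and j: "j \<le> length ls" and pij: "p i = p j"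
    and F: "F j i \<noteq> 0" and x: "sym i dr 0 = Some (a, False)"
  shows "\<exists>dr'. sym j dr' 0 = Some (a, False) \<and> F (np j dr') (np i dr) = F j i"
proof -
  have mi: "mvinv a i = Some (np i dr)" using x i by (auto simp: mvinv_iff)
  have k: "np i dr \<le> length ls" "p (np i dr) = s a" "p i = t a" "a \<in> Arr" using mvinv_props[OF i mi] by auto
  have mj: "mv a (np i dr) = Some i" using mvinv_mv[OF i mi] .
  have "optF (mv a (np i dr)) (F j) = optF (mvinv a j) (\<lambda>j'. F j' (np i dr))"
    using PC k j pij unfolding PC_def by auto
  then have eq: "optF (mvinv a j) (\<lambda>j'. F j' (np i dr)) = F j i" using mj by simp
  then obtain j' where j': "mvinv a j = Some j'" using F by (cases "mvinv a j") auto
  then obtain dr' where "sym j dr' 0 = Some (a, False)" "j' = np j dr'" using j by (auto simp: mvinv_iff)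
  then show ?thesis using eq j' by auto
qed

definition Cross :: "nat \<Rightarrow> bool \<Rightarrow> nat \<Rightarrow> bool \<Rightarrow> bool" where
  "Cross i di j dj \<longleftrightarrow> (\<forall>c. sym j dj 0 = Some c \<longrightarrow> sym i (\<not> di) 0 \<noteq> Some c) \<and>
                        (\<forall>c. sym i di 0 = Some c \<longrightarrow> sym j (\<not> dj) 0 \<noteq> Some c)"

lemma step:
  assumes PC: "PC F" and i: "i \<le> length ls" and j: "j \<le> length ls" and pij: "p i = p j"
    and F: "F j i \<noteq> 0" and C: "Cross i di j dj"
  shows "(sym i di 0 = sym j dj 0 \<and> (sym i di 0 \<noteq> None \<longrightarrow> F (np j dj) (np i di) = F j i))
         \<or> key (sym i di 0) > key (sym j dj 0)"
proof -
  consider (yd) a where "sym j dj 0 = Some (a, True)" | (xi) a where "sym i di 0 = Some (a, False)"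
    | (oth) "\<forall>a. sym j dj 0 \<noteq> Some (a, True)" "\<forall>a. sym i di 0 \<noteq> Some (a, False)" by blast
  then show ?thesis
  proof cases
    case yd
    obtain dr' where dr': "sym i dr' 0 = Some (a, True)" "F (np j dj) (np i dr') = F j i"
      using D1[OF PC i j pij F yd] by blast
    have "dr' = di" using C yd dr' unfolding Cross_def by (cases dr'; cases di) auto
    then show ?thesis using dr' yd by auto
  next
    case xi
    obtain dr' where dr': "sym j dr' 0 = Some (a, False)" "F (np j dr') (np i di) = F j i"
      using D2[OF PC i j pij F xi] by blast
    have "dr' = dj" using C xi dr' unfolding Cross_def by (cases dr'; cases dj) auto
    then show ?thesis using dr' xi by auto
  next
    case oth
    show ?thesis
    proof (cases "sym i di 0 = None \<and> sym j dj 0 = None")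
      case True then show ?thesis by auto
    next
      case False
      have "key (sym i di 0) \<ge> 1" using oth(2) by (cases "sym i di 0") (auto simp: key_def)
      moreover have "key (sym j dj 0) \<le> 1" using oth(1) by (cases "sym j dj 0") (auto simp: key_def)
      moreover have "key (sym i di 0) \<noteq> 1 \<or> key (sym j dj 0) \<noteq> 1" using False oth
        by (cases "sym i di 0"; cases "sym j dj 0") (auto simp: key_def split: if_splits)
      ultimately show ?thesis by auto
    qed
  qed
qed

lemma step_next:
  assumes PC: "PC F" and i: "i \<le> length ls" and j: "j \<le> length ls" and pij: "p i = p j"
    and F: "F j i \<noteq> 0" and C: "Cross i di j dj" and eq: "sym i di 0 = sym j dj 0" and nn: "sym i di 0 = Some c"
  shows "np i di \<le> length ls \<and> np j dj \<le> length ls \<and> p (np i di) = p (np j dj) \<and>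
         F (np j dj) (np i di) \<noteq> 0 \<and> Cross (np i di) di (np j dj) dj"
proof -
  have nj: "sym j dj 0 = Some c" using eq nn by simp
  have Fe: "F (np j dj) (np i di) = F j i" using step[OF PC i j pij F C] nn nj by simp
  have a: "np i di \<le> length ls" "p (np i di) = ltgt s t c" using sym_np[OF i nn] by auto
  have b: "np j dj \<le> length ls" "p (np j dj) = ltgt s t c" using sym_np[OF j nj] by auto
  have bi: "sym (np i di) (\<not> di) 0 = Some (lflip c)" using sym_back[OF i nn] .
  have bj: "sym (np j dj) (\<not> dj) 0 = Some (lflip c)" using sym_back[OF j nj] .
  have "Cross (np i di) di (np j dj) dj"
    unfolding Cross_def
  proof (intro conjI allI impI)
    fix c' assume "sym (np j dj) dj 0 = Some c'"
    then show "sym (np i di) (\<not> di) 0 \<noteq> Some c'" using NB'[OF b(1), of dj c'] bi bj by auto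
  next
    fix c' assume "sym (np i di) di 0 = Some c'"
    then show "sym (np j dj) (\<not> dj) 0 \<noteq> Some c'" using NB'[OF a(1), of di c'] bi bj by auto
  qed
  then show ?thesis using a b Fe F by auto
qed

lemma adv_shift: "adv i dr (Suc m) = adv (np i dr) dr m"
  by (auto simp: adv_def np_def)

lemma walk:
  assumes PC: "PC F"
  shows "\<And>i j. i \<le> length ls \<Longrightarrow> j \<le> length ls \<Longrightarrow> p i = p j \<Longrightarrow> F j i \<noteq> 0 \<Longrightarrow> Cross i di j dj \<Longrightarrow>
    (\<forall>m'<m. sym i di m' = sym j dj m' \<and> sym i di m' \<noteq> None) \<Longrightarrow>
    adv i di m \<le> length ls \<and> adv j dj m \<le> length ls \<and> p (adv i di m) = p (adv j dj m) \<and>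
    F (adv j dj m) (adv i di m) \<noteq> 0 \<and> Cross (adv i di m) di (adv j dj m) dj"
proof (induction m)
  case 0 then show ?case by simp
next
  case (Suc m)
  have "sym i di 0 \<noteq> None" using Suc.prems(6) by blast
  then obtain c where c: "sym i di 0 = Some c" by blast
  have e: "sym i di 0 = sym j dj 0" using Suc.prems(6) by auto
  note nx = step_next[OF PC Suc.prems(1-5) e c]
  have hm: "\<forall>m'<m. sym (np i di) di m' = sym (np j dj) dj m' \<and> sym (np i di) di m' \<noteq> None"
  proof (intro allI impI)
    fix m' assume "m' < m"
    then have "Suc m' < Suc m" by simp
    then have "sym i di (Suc m') = sym j dj (Suc m') \<and> sym i di (Suc m') \<noteq> None"
      using Suc.prems(6) by blast
    then show "sym (np i di) di m' = sym (np j dj) dj m' \<and> sym (np i di) di m' \<noteq> None"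
      unfolding sym_shift by (elim conjE) (intro conjI; assumption)
  qed
  have "adv (np i di) di m \<le> length ls \<and> adv (np j dj) dj m \<le> length ls \<and>
    p (adv (np i di) di m) = p (adv (np j dj) dj m) \<and>
    F (adv (np j dj) dj m) (adv (np i di) di m) \<noteq> 0 \<and> Cross (adv (np i di) di m) di (adv (np j dj) dj m) dj"
    using Suc.IH[of "np i di" "np j dj"] nx hm by blast
  then show ?case unfolding adv_shift .
qed

lemma walk_hle:
  assumes PC: "PC F" and i: "i \<le> length ls" and j: "j \<le> length ls" and pij: "p i = p j"
    and F: "F j i \<noteq> 0" and C: "Cross i di j dj"
  shows "hle (sym i di) (sym j dj)"
proof (cases "sym i di = sym j dj")
  case True then show ?thesis by (simp add: hle_def)
next
  case False
  then have "\<exists>m. sym i di m \<noteq> sym j dj m" by auto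
  then obtain m where m: "sym i di m \<noteq> sym j dj m" "\<forall>m'<m. sym i di m' = sym j dj m'"
    using exists_least_iff[of "\<lambda>m. sym i di m \<noteq> sym j dj m"] by auto
  have nn: "\<forall>m'<m. sym i di m' = sym j dj m' \<and> sym i di m' \<noteq> None"
  proof (intro allI impI conjI)
    fix m' assume "m' < m"
    then show "sym i di m' = sym j dj m'" using m by auto
    show "sym i di m' \<noteq> None"
    proof
      assume "sym i di m' = None"
      then have "sym i di m = None" "sym j dj m = None"
        using sym_None_mono \<open>m' < m\<close> m(2) by (metis less_imp_le)+
      then show False using m(1) by simp
    qed
  qed
  note w = walk[OF PC i j pij F C nn]
  have "key (sym (adv i di m) di 0) > key (sym (adv j dj m) dj 0)"
    using step[OF PC, of "adv i di m" "adv j dj m" di dj] w m(1) by (auto simp: sym_adv)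
  then show ?thesis using m(2) unfolding hle_def hlt_def by (auto simp: sym_adv)
qed

lemma eqL: "i \<le> length ls \<Longrightarrow> j \<le> length ls \<Longrightarrow> sym i False = sym j False \<Longrightarrow> i = j"
proof (rule ccontr)
  assume a: "sym i False = sym j False" "i \<noteq> j"
  show False
  proof (cases "i < j")
    case True
    have "sym i False i = sym j False i" using a by simp
    then show False using True by (simp add: sym_def)
  next
    case False
    have "sym i False j = sym j False j" using a by simp
    moreover have "j < i" using False a(2) by simp
    ultimately show False by (simp add: sym_def)
  qed
qed

lemma palin:
  assumes i: "i \<le> length ls" and j: "j \<le> length ls" and e: "sym i True = sym j False" and lt: "i < j"
  shows False
proof -
  define r where "r = (j - i) div 2"
  have r: "j - i = 2 * r + 1 \<or> (j - i = 2 * r \<and> r \<ge> 1)"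
    using lt unfolding r_def by presburger
  have er: "sym i True r = sym j False r" using e by simp
  show False
  proof (cases "j - i = 2 * r + 1")
    case True
    have "i + r < length ls" "r < j" "j - r - 1 = i + r" using True j lt by auto
    then have "ls ! (i + r) = lflip (ls ! (i + r))" using er by (simp add: sym_def)
    then show False by simp
  next
    case False
    then have r2: "j - i = 2 * r" "r \<ge> 1" using r by auto
    have "i + r < length ls" "r < j" "j - r - 1 = i + r - 1" using r2 j lt by auto
    then have "ls ! Suc (i + r - 1) = lflip (ls ! (i + r - 1))" using er r2 by (simp add: sym_def)
    then show False using adj_nb[of "i + r - 1"] \<open>i + r < length ls\<close> r2 by simp
  qed
qed

lemma main_prec:
  assumes PC: "PC F" and i: "i \<le> length ls" and j: "j \<le> length ls" and pij: "p i = p j"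
    and F: "F j i \<noteq> 0" and ne: "i \<noteq> j"
  shows "prec i j"
proof -
  define OK where "OK dl \<longleftrightarrow> (\<forall>c. sym j True 0 = Some c \<longrightarrow> sym i (\<not> dl) 0 \<noteq> Some c) \<and>
                        (\<forall>c. sym i dl 0 = Some c \<longrightarrow> sym j False 0 \<noteq> Some c)" for dl
  have "OK True \<or> OK False"
  proof (rule ccontr)
    assume "\<not> (OK True \<or> OK False)"
    then obtain c1 c2 where c1: "(sym j True 0 = Some c1 \<and> sym i False 0 = Some c1) \<or> (sym i True 0 = Some c1 \<and> sym j False 0 = Some c1)"
      and c2: "(sym j True 0 = Some c2 \<and> sym i True 0 = Some c2) \<or> (sym i False 0 = Some c2 \<and> sym j False 0 = Some c2)"
      unfolding OK_def by auto
    show False using c1 c2 NB[OF i] NB[OF j] by metis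
  qed
  then obtain dl where dl: "OK dl" by blast
  have C1: "Cross i dl j True" using dl unfolding OK_def Cross_def by auto
  have C2: "Cross i (\<not> dl) j False" using dl unfolding OK_def Cross_def by auto
  have h1: "hle (sym i dl) (sym j True)" using walk_hle[OF PC i j pij F C1] .
  have h2: "hle (sym i (\<not> dl)) (sym j False)" using walk_hle[OF PC i j pij F C2] .
  have "hlt (sym i dl) (sym j True) \<or> hlt (sym i (\<not> dl)) (sym j False)"
  proof (rule ccontr)
    assume "\<not> ?thesis"
    then have e1: "sym i dl = sym j True" and e2: "sym i (\<not> dl) = sym j False" using h1 h2 by (auto simp: hle_def)
    show False
    proof (cases dl)
      case True then show False using eqL[OF i j] e2 ne by auto
    next
      case False
      then have "sym i True = sym j False" "sym j True = sym i False" using e1 e2 by auto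
      then show False using palin[OF i j] palin[OF j i] ne by (metis linorder_neqE_nat)
    qed
  qed
  then show ?thesis using h1 h2 unfolding prec_def by blast
qed

end


context smod begin

lemma diag_step:
  assumes PC: "PC F" and i: "i < length ls"
  shows "F (Suc i) (Suc i) = F i i"
proof -
  obtain a b where ab: "ls ! i = (a, b)" by (cases "ls ! i")
  have aA: "a \<in> Arr" using arrs[OF i] ab by simp
  show ?thesis
  proof (cases b)
    case True
    have s0: "sym i True 0 = Some (a, True)" using i ab True by (simp add: sym_def)
    have m: "mv a i = Some (Suc i)" using s0 by (simp add: mv_def)
    have mi: "mvinv a (Suc i) = Some i" using mv_mvinv[OF _ m] i by simp
    have pp: "p i = s a" "p (Suc i) = t a" using mv_props[OF _ m] i by auto
    have "optF (mv a i) (F (Suc i)) = optF (mvinv a (Suc i)) (\<lambda>j. F j i)"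
      using PC aA pp i unfolding PC_def by auto
    then show ?thesis using m mi by simp
  next
    case False
    have s0: "sym i True 0 = Some (a, False)" using i ab False by (simp add: sym_def)
    have m: "mvinv a i = Some (Suc i)" using s0 by (simp add: mvinv_def)
    have mi: "mv a (Suc i) = Some i" using mvinv_mv[OF _ m] i by simp
    have pp: "p (Suc i) = s a" "p i = t a" using mvinv_props[OF _ m] i by auto
    have "optF (mv a (Suc i)) (F i) = optF (mvinv a i) (\<lambda>j. F j (Suc i))"
      using PC aA pp i unfolding PC_def by auto
    then show ?thesis using m mi by simp
  qed
qed

lemma diag_const: "PC F \<Longrightarrow> i \<le> length ls \<Longrightarrow> F i i = F 0 0"
proof (induction i)
  case 0 then show ?case by simp
next
  case (Suc i) then show ?case using diag_step[of F i] by simp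
qed

lemma wf_prec: "wf {(j, i). i \<le> length ls \<and> j \<le> length ls \<and> prec i j}"
proof (rule finite_acyclic_wf)
  let ?R = "{(j, i). i \<le> length ls \<and> j \<le> length ls \<and> prec i j}"
  show "finite ?R" by (rule finite_subset[of _ "{..length ls} \<times> {..length ls}"]) auto
  have "trans ?R" unfolding trans_def using prec_trans by blast
  then have "?R\<^sup>+ = ?R" by (rule trancl_id)
  then show "acyclic ?R" unfolding acyclic_def using prec_irrefl by auto
qed

lemma zero_lemma:
  fixes H :: "nat \<Rightarrow> nat \<Rightarrow> 'k::field"
  assumes idem: "\<And>i k. i \<le> length ls \<Longrightarrow> k \<le> length ls \<Longrightarrow> p k = p i \<Longrightarrow> H k i = (\<Sum>j\<in>Pset (p i). H k j * H j i)"
    and diag: "\<And>i. i \<le> length ls \<Longrightarrow> H i i = 0"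
    and supp: "\<And>i j. i \<le> length ls \<Longrightarrow> j \<le> length ls \<Longrightarrow> p i = p j \<Longrightarrow> H j i \<noteq> 0 \<Longrightarrow> i \<noteq> j \<Longrightarrow> prec i j"
  shows "i \<le> length ls \<Longrightarrow> k \<le> length ls \<Longrightarrow> p k = p i \<Longrightarrow> H k i = 0"
proof (induction i arbitrary: k rule: wf_induct_rule[OF wf_prec])
  case (1 i)
  have "H k i = (\<Sum>j\<in>Pset (p i). H k j * H j i)" by (rule idem) (use 1 in auto)
  also have "\<dots> = (\<Sum>j\<in>Pset (p i). 0)"
  proof (rule sum.cong[OF refl])
    fix j assume j: "j \<in> Pset (p i)"
    then have jn: "j \<le> length ls" "p j = p i" by (auto simp: Pset_def)
    show "H k j * H j i = 0"
    proof (cases "H j i = 0")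
      case False
      show ?thesis
      proof (cases "j = i")
        case True then show ?thesis using diag 1 by simp
      next
        case ne: False
        have "prec i j" using supp[OF 1(2) jn(1)] jn False ne by auto
        then have "H k j = 0" using 1 jn by auto
        then show ?thesis by simp
      qed
    qed simp
  qed
  finally show ?case by simp
qed

lemma idem_cases:
  fixes F :: "nat \<Rightarrow> nat \<Rightarrow> 'k::field"
  assumes PC: "PC F"
    and idem: "\<And>i k. i \<le> length ls \<Longrightarrow> k \<le> length ls \<Longrightarrow> p k = p i \<Longrightarrow> F k i = (\<Sum>j\<in>Pset (p i). F k j * F j i)"
  shows "(\<forall>i k. i \<le> length ls \<longrightarrow> k \<le> length ls \<longrightarrow> p k = p i \<longrightarrow> F k i = 0) \<or>
         (\<forall>i k. i \<le> length ls \<longrightarrow> k \<le> length ls \<longrightarrow> p k = p i \<longrightarrow> F k i = (if k = i then 1 else 0))"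
proof -
  define c where "c = F 0 0"
  have dc: "\<And>i. i \<le> length ls \<Longrightarrow> F i i = c" unfolding c_def by (rule diag_const[OF PC])
  have supp: "\<And>i j. i \<le> length ls \<Longrightarrow> j \<le> length ls \<Longrightarrow> p i = p j \<Longrightarrow> F j i \<noteq> 0 \<Longrightarrow> i \<noteq> j \<Longrightarrow> prec i j"
    using main_prec[OF PC] by blast
  have 0: "0 \<in> Pset (p 0)" by (simp add: Pset_def)
  have "F 0 0 = (\<Sum>j\<in>Pset (p 0). F 0 j * F j 0)" by (rule idem) simp_all
  then have "c = (\<Sum>j\<in>Pset (p 0). F 0 j * F j 0)" by (simp only: c_def)
  also have "\<dots> = (\<Sum>j\<in>Pset (p 0). if j = 0 then c * c else 0)"
  proof (rule sum.cong[OF refl])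
    fix j assume j: "j \<in> Pset (p 0)"
    then have jn: "j \<le> length ls" "p j = p 0" by (auto simp: Pset_def)
    show "F 0 j * F j 0 = (if j = 0 then c * c else 0)"
    proof (cases "j = 0")
      case True then show ?thesis using dc by simp
    next
      case False
      have "\<not> (F 0 j \<noteq> 0 \<and> F j 0 \<noteq> 0)"
      proof
        assume "F 0 j \<noteq> 0 \<and> F j 0 \<noteq> 0"
        then have "prec 0 j" "prec j 0" using supp[of 0 j] supp[of j 0] jn False by auto
        then show False using prec_trans prec_irrefl by blast
      qed
      then show ?thesis using False by auto
    qed
  qed
  also have "\<dots> = c * c" using 0 by (simp add: sum.delta)
  finally have "c * c = c" by simp
  then have c01: "c = 0 \<or> c = 1"
  proof -
    have "c * (c - 1) = 0" using \<open>c * c = c\<close> by (simp add: algebra_simps)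
    then show ?thesis by simp
  qed
  show ?thesis
  proof (cases "c = 0")
    case True
    have "F k i = 0" if "i \<le> length ls" "k \<le> length ls" "p k = p i" for i k
    proof -
      have d0: "\<And>i. i \<le> length ls \<Longrightarrow> F i i = 0" using dc True by simp
      show ?thesis by (rule zero_lemma[of F, OF idem d0 supp that])
    qed
    then show ?thesis by blast
  next
    case False
    then have c1: "c = 1" using c01 by simp
    define G where "G k i = (if k = i then 1 else 0) - F k i" for k i
    have Gd: "G i i = 0" if "i \<le> length ls" for i using dc[OF that] c1 by (simp add: G_def)
    have Gs: "prec i j" if "i \<le> length ls" "j \<le> length ls" "p i = p j" "G j i \<noteq> 0" "i \<noteq> j" for i j
      using supp[OF that(1-3)] that by (auto simp: G_def)
    have Gi: "G k i = (\<Sum>j\<in>Pset (p i). G k j * G j i)"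
      if ik: "i \<le> length ls" "k \<le> length ls" "p k = p i" for i k
    proof -
      let ?P = "Pset (p i)"
      have kP: "k \<in> ?P" and iP: "i \<in> ?P" using ik by (auto simp: Pset_def)
      have e: "G k j * G j i = (if j = k then (if k = i then 1 else 0) else 0) - (if j = k then F k i else 0)
                 - (if j = i then F k i else 0) + F k j * F j i" for j
        by (auto simp: G_def algebra_simps)
      have "(\<Sum>j\<in>?P. G k j * G j i) = (\<Sum>j\<in>?P. (if j = k then (if k = i then 1 else 0) else 0))
           - (\<Sum>j\<in>?P. (if j = k then F k i else 0)) - (\<Sum>j\<in>?P. (if j = i then F k i else 0))
           + (\<Sum>j\<in>?P. F k j * F j i)"
        unfolding e by (simp add: sum_subtractf sum.distrib)
      also have "\<dots> = (if k = i then 1 else 0) - F k i - F k i + F k i"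
      proof -
        have s4: "(\<Sum>j\<in>?P. F k j * F j i) = F k i" by (rule sym[OF idem[OF ik]])
        show ?thesis using kP iP by (simp only: s4 sum.delta if_True finite_Pset)
      qed
      finally show ?thesis by (simp add: G_def)
    qed
    have "G k i = 0" if "i \<le> length ls" "k \<le> length ls" "p k = p i" for i k
      by (rule zero_lemma[of G, OF Gi Gd Gs that])
    then show ?thesis by (auto simp: G_def)
  qed
qed

end


lemma mult_entry:
  assumes "A \<in> carrier_mat nr m" "B \<in> carrier_mat m nc" "i < nr" "j < nc"
  shows "(A * B) $$ (i, j) = (\<Sum>r\<in>{0..<m}. A $$ (i, r) * B $$ (r, j))"
  using assms by (simp add: scalar_prod_def)

context smod begin

lemma p_in_V: "i \<le> length ls \<Longrightarrow> p i \<in> V"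
proof -
  assume i: "i \<le> length ls"
  have ne: "length ls > 0" using ls_ne by simp
  show ?thesis
  proof (cases "i < length ls")
    case True
    then show ?thesis using arrs[OF True] ends by (auto simp: p_def lsrc_def)
  next
    case False
    then show ?thesis using arrs[of "length ls - 1"] ends ne by (auto simp: p_def ltgt_def)
  qed
qed

definition dd :: "'v \<Rightarrow> nat" where "dd v = card (Pset v)"

definition enum :: "'v \<Rightarrow> nat \<Rightarrow> nat" where
  "enum v = (SOME h. bij_betw h {0..<dd v} (Pset v))"

lemma enum_bij: "bij_betw (enum v) {0..<dd v} (Pset v)"
proof -
  have "\<exists>h. bij_betw h {0..<dd v} (Pset v)" unfolding dd_def by (rule ex_bij_betw_nat_finite) simp
  then show ?thesis unfolding enum_def by (rule someI_ex)
qed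

definition idx :: "nat \<Rightarrow> nat" where
  "idx i = inv_into {0..<dd (p i)} (enum (p i)) i"

lemma idx_props: "i \<in> Pset v \<Longrightarrow> idx i < dd v \<and> enum v (idx i) = i"
proof -
  assume i: "i \<in> Pset v"
  then have pv: "p i = v" by (simp add: Pset_def)
  have b: "bij_betw (enum v) {0..<dd v} (Pset v)" by (rule enum_bij)
  have "inv_into {0..<dd v} (enum v) i \<in> {0..<dd v}"
    using b i by (metis bij_betw_def inv_into_into)
  moreover have "enum v (inv_into {0..<dd v} (enum v) i) = i"
    using b i by (meson bij_betw_inv_into_right)
  ultimately show ?thesis unfolding idx_def pv by simp
qed

lemma enum_props: "r < dd v \<Longrightarrow> enum v r \<in> Pset v \<and> idx (enum v r) = r"
proof -
  assume r: "r < dd v"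
  have b: "bij_betw (enum v) {0..<dd v} (Pset v)" by (rule enum_bij)
  have e: "enum v r \<in> Pset v" using b r by (auto simp: bij_betw_def)
  then have "p (enum v r) = v" by (simp add: Pset_def)
  then have "idx (enum v r) = inv_into {0..<dd v} (enum v) (enum v r)" by (simp add: idx_def)
  also have "\<dots> = r" using b r by (simp add: bij_betw_def inv_into_f_f)
  finally show ?thesis using e by simp
qed

lemma enum_inj: "r < dd v \<Longrightarrow> r' < dd v \<Longrightarrow> enum v r = enum v r' \<longleftrightarrow> r = r'"
  using enum_props by metis

lemma sum_reindex: "(\<Sum>r\<in>{0..<dd v}. g (enum v r)) = (\<Sum>j\<in>Pset v. g j)"
  by (rule sum.reindex_bij_betw[OF enum_bij])

lemma sum_reindex': "(\<Sum>r\<in>{0..<dd v}. h r) = (\<Sum>j\<in>Pset v. h (idx j))"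
proof -
  have "(\<Sum>r\<in>{0..<dd v}. h r) = (\<Sum>r\<in>{0..<dd v}. h (idx (enum v r)))"
    by (rule sum.cong) (auto simp: enum_props)
  also have "\<dots> = (\<Sum>j\<in>Pset v. h (idx j))" by (rule sum_reindex)
  finally show ?thesis .
qed

lemma prod_entry:
  assumes "A \<in> carrier_mat (dd v) (dd v)" "B \<in> carrier_mat (dd v) (dd v)" "k \<in> Pset v" "i \<in> Pset v"
  shows "(A * B) $$ (idx k, idx i) = (\<Sum>j\<in>Pset v. A $$ (idx k, idx j) * B $$ (idx j, idx i))"
proof -
  have "(A * B) $$ (idx k, idx i) = (\<Sum>r\<in>{0..<dd v}. A $$ (idx k, r) * B $$ (r, idx i))"
    using assms idx_props by (intro mult_entry[OF assms(1,2)]) auto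
  also have "\<dots> = (\<Sum>j\<in>Pset v. A $$ (idx k, idx j) * B $$ (idx j, idx i))" by (rule sum_reindex')
  finally show ?thesis .
qed

definition Mx :: "'a \<Rightarrow> 'k::field mat" where
  "Mx a = mat (dd (t a)) (dd (s a)) (\<lambda>(r, c). if mv a (enum (s a) c) = Some (enum (t a) r) then 1 else 0)"

lemma Mx_carrier: "Mx a \<in> carrier_mat (dd (t a)) (dd (s a))"
  by (simp add: Mx_def)

lemma Mx_entry: "k \<in> Pset (t a) \<Longrightarrow> i \<in> Pset (s a) \<Longrightarrow> Mx a $$ (idx k, idx i) = (if mv a i = Some k then 1 else 0)"
  using idx_props by (simp add: Mx_def)

lemma prodL:
  fixes f :: "'v \<Rightarrow> 'k::field mat"
  assumes f: "f (t a) \<in> carrier_mat (dd (t a)) (dd (t a))" and i: "i \<in> Pset (s a)" and k: "k \<in> Pset (t a)"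
  shows "(f (t a) * Mx a) $$ (idx k, idx i) = optF (mv a i) (\<lambda>i'. f (t a) $$ (idx k, idx i'))"
proof -
  have "(f (t a) * Mx a) $$ (idx k, idx i) = (\<Sum>r\<in>{0..<dd (t a)}. f (t a) $$ (idx k, r) * Mx a $$ (r, idx i))"
    using idx_props i k by (intro mult_entry[OF f Mx_carrier]) auto
  also have "\<dots> = (\<Sum>j\<in>Pset (t a). f (t a) $$ (idx k, idx j) * Mx a $$ (idx j, idx i))"
    by (rule sum_reindex')
  also have "\<dots> = (\<Sum>j\<in>Pset (t a). if j = the (mv a i) \<and> mv a i \<noteq> None then f (t a) $$ (idx k, idx j) else 0)"
    by (rule sum.cong[OF refl]) (auto simp: Mx_entry i)
  also have "\<dots> = optF (mv a i) (\<lambda>i'. f (t a) $$ (idx k, idx i'))"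
  proof (cases "mv a i")
    case None then show ?thesis by simp
  next
    case (Some i')
    have "i' \<in> Pset (t a)" using mv_props[of i a i'] i Some by (auto simp: Pset_def)
    then show ?thesis using Some by (simp add: sum.delta)
  qed
  finally show ?thesis .
qed

lemma prodR:
  fixes f :: "'v \<Rightarrow> 'k::field mat"
  assumes f: "f (s a) \<in> carrier_mat (dd (s a)) (dd (s a))" and i: "i \<in> Pset (s a)" and k: "k \<in> Pset (t a)"
  shows "(Mx a * f (s a)) $$ (idx k, idx i) = optF (mvinv a k) (\<lambda>j. f (s a) $$ (idx j, idx i))"
proof -
  have kn: "k \<le> length ls" using k by (simp add: Pset_def)
  have "(Mx a * f (s a)) $$ (idx k, idx i) = (\<Sum>r\<in>{0..<dd (s a)}. Mx a $$ (idx k, r) * f (s a) $$ (r, idx i))"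
    using idx_props i k by (intro mult_entry[OF Mx_carrier f]) auto
  also have "\<dots> = (\<Sum>j\<in>Pset (s a). Mx a $$ (idx k, idx j) * f (s a) $$ (idx j, idx i))"
    by (rule sum_reindex')
  also have "\<dots> = (\<Sum>j\<in>Pset (s a). if j = the (mvinv a k) \<and> mvinv a k \<noteq> None then f (s a) $$ (idx j, idx i) else 0)"
  proof (rule sum.cong[OF refl])
    fix j assume j: "j \<in> Pset (s a)"
    then have jn: "j \<le> length ls" by (simp add: Pset_def)
    have "mv a j = Some k \<longleftrightarrow> mvinv a k = Some j" using mv_mvinv[OF jn] mvinv_mv[OF kn] by blast
    then show "Mx a $$ (idx k, idx j) * f (s a) $$ (idx j, idx i) =
      (if j = the (mvinv a k) \<and> mvinv a k \<noteq> None then f (s a) $$ (idx j, idx i) else 0)"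
      using Mx_entry[OF k j] by auto
  qed
  also have "\<dots> = optF (mvinv a k) (\<lambda>j. f (s a) $$ (idx j, idx i))"
  proof (cases "mvinv a k")
    case None then show ?thesis by simp
  next
    case (Some j)
    have "j \<in> Pset (s a)" using mvinv_props[OF kn Some] by (auto simp: Pset_def)
    then show ?thesis using Some by (simp add: sum.delta)
  qed
  finally show ?thesis .
qed

definition Fp :: "('v \<Rightarrow> 'k::field mat) \<Rightarrow> nat \<Rightarrow> nat \<Rightarrow> 'k" where
  "Fp f j i = (if p j = p i then f (p i) $$ (idx j, idx i) else 0)"

lemma endo_PC:
  fixes f :: "'v \<Rightarrow> 'k::field mat"
  assumes "is_endo V Arr s t dd Mx f"
  shows "PC (Fp f)"
  unfolding PC_def
proof (intro allI impI)
  fix a i k assume a: "a \<in> Arr" and i: "i \<le> length ls" and k: "k \<le> length ls" and pi: "p i = s a" and pk: "p k = t a"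
  have iP: "i \<in> Pset (s a)" and kP: "k \<in> Pset (t a)" using i k pi pk by (auto simp: Pset_def)
  have V: "s a \<in> V" "t a \<in> V" using ends a by auto
  have cs: "f (s a) \<in> carrier_mat (dd (s a)) (dd (s a))" and ct: "f (t a) \<in> carrier_mat (dd (t a)) (dd (t a))"
    and eq: "f (t a) * Mx a = Mx a * f (s a)" using assms V a unfolding is_endo_def by auto
  have L: "optF (mv a i) (Fp f k) = optF (mv a i) (\<lambda>i'. f (t a) $$ (idx k, idx i'))"
  proof (cases "mv a i")
    case (Some i')
    then have "p i' = t a" using mv_props[OF i Some] by simp
    then show ?thesis using Some pk by (simp add: Fp_def)
  qed simp
  have R: "optF (mvinv a k) (\<lambda>j. Fp f j i) = optF (mvinv a k) (\<lambda>j. f (s a) $$ (idx j, idx i))"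
  proof (cases "mvinv a k")
    case (Some j)
    then have "p j = s a" using mvinv_props[OF k Some] by simp
    then show ?thesis using Some pi by (simp add: Fp_def)
  qed simp
  show "optF (mv a i) (Fp f k) = optF (mvinv a k) (\<lambda>j. Fp f j i)"
    unfolding L R using prodL[where f=f and a=a, OF ct iP kP] prodR[where f=f and a=a, OF cs iP kP] eq by simp
qed

definition mk :: "(nat \<Rightarrow> nat \<Rightarrow> 'k::field) \<Rightarrow> 'v \<Rightarrow> 'k mat" where
  "mk F v = mat (dd v) (dd v) (\<lambda>(r, c). F (enum v r) (enum v c))"

lemma mk_carrier: "mk F v \<in> carrier_mat (dd v) (dd v)"
  by (simp add: mk_def)

lemma mk_entry: "j \<in> Pset v \<Longrightarrow> i \<in> Pset v \<Longrightarrow> mk F v $$ (idx j, idx i) = F j i"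
  using idx_props by (simp add: mk_def)

lemma PC_endo:
  fixes F :: "nat \<Rightarrow> nat \<Rightarrow> 'k::field"
  assumes PC: "PC F"
  shows "is_endo V Arr s t dd Mx (mk F)"
  unfolding is_endo_def
proof (intro conjI ballI)
  fix v assume "v \<in> V" show "mk F v \<in> carrier_mat (dd v) (dd v)" by (simp add: mk_def)
next
  fix a assume a: "a \<in> Arr"
  show "mk F (t a) * Mx a = (Mx a :: 'k mat) * mk F (s a)"
  proof (rule eq_matI)
    show "dim_row (mk F (t a) * Mx a) = dim_row (Mx a * mk F (s a))" by (simp add: mk_def Mx_def)
    show "dim_col (mk F (t a) * Mx a) = dim_col (Mx a * mk F (s a))" by (simp add: mk_def Mx_def)
  next
    fix r c assume r: "r < dim_row (Mx a * mk F (s a))" and c: "c < dim_col (Mx a * mk F (s a))"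
    then have r': "r < dd (t a)" and c': "c < dd (s a)" by (auto simp: mk_def Mx_def)
    define k where "k = enum (t a) r"
    define i where "i = enum (s a) c"
    have kP: "k \<in> Pset (t a)" and rk: "idx k = r" using enum_props[OF r'] k_def by auto
    have iP: "i \<in> Pset (s a)" and ci: "idx i = c" using enum_props[OF c'] i_def by auto
    have kn: "k \<le> length ls" "p k = t a" and i_n: "i \<le> length ls" "p i = s a" using kP iP by (auto simp: Pset_def)
    have L: "(mk F (t a) * Mx a) $$ (idx k, idx i) = optF (mv a i) (F k)"
    proof -
      have "(mk F (t a) * Mx a) $$ (idx k, idx i) = optF (mv a i) (\<lambda>i'. mk F (t a) $$ (idx k, idx i'))"
        by (rule prodL[where f="mk F" and a=a, OF mk_carrier iP kP])
      also have "\<dots> = optF (mv a i) (F k)"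
      proof (cases "mv a i")
        case (Some i')
        then have "i' \<in> Pset (t a)" using mv_props[OF i_n(1) Some] by (simp add: Pset_def)
        then show ?thesis using Some mk_entry[OF kP] by simp
      qed simp
      finally show ?thesis .
    qed
    have R: "(Mx a * mk F (s a)) $$ (idx k, idx i) = optF (mvinv a k) (\<lambda>j. F j i)"
    proof -
      have "(Mx a * mk F (s a)) $$ (idx k, idx i) = optF (mvinv a k) (\<lambda>j. mk F (s a) $$ (idx j, idx i))"
        by (rule prodR[where f="mk F" and a=a, OF mk_carrier iP kP])
      also have "\<dots> = optF (mvinv a k) (\<lambda>j. F j i)"
      proof (cases "mvinv a k")
        case (Some j)
        then have "j \<in> Pset (s a)" using mvinv_props[OF kn(1) Some] by (simp add: Pset_def)
        then show ?thesis using Some mk_entry[OF _ iP] by simp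
      qed simp
      finally show ?thesis .
    qed
    show "(mk F (t a) * Mx a) $$ (r, c) = (Mx a * mk F (s a)) $$ (r, c)"
      using L R PC a kn i_n unfolding PC_def rk ci by auto
  qed
qed

lemma Mx_rep:
  assumes comp: "\<And>al be. (al, be) \<in> Rel \<Longrightarrow> al \<in> Arr \<and> be \<in> Arr \<and> t be = s al"
  shows "is_rep V Arr s t Rel dd (Mx :: 'a \<Rightarrow> 'k::field mat)"
  unfolding is_rep_def
proof (intro conjI ballI)
  fix a assume "a \<in> Arr" then show "(Mx a :: 'k mat) \<in> carrier_mat (dd (t a)) (dd (s a))" by (simp add: Mx_carrier)
next
  fix x assume x: "x \<in> Rel"
  obtain al be where ab: "x = (al, be)" by (cases x)
  have c: "t be = s al" using comp x ab by auto
  have "(Mx al :: 'k mat) * Mx be = 0\<^sub>m (dd (t al)) (dd (s be))"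
  proof (rule eq_matI)
    fix r0 c0 assume r0: "r0 < dim_row (0\<^sub>m (dd (t al)) (dd (s be)) :: 'k mat)" and c0: "c0 < dim_col (0\<^sub>m (dd (t al)) (dd (s be)) :: 'k mat)"
    then have r0': "r0 < dd (t al)" and c0': "c0 < dd (s be)" by auto
    have cb: "(Mx be :: 'k mat) \<in> carrier_mat (dd (s al)) (dd (s be))" using Mx_carrier[of be] c by simp
    have "((Mx al :: 'k mat) * Mx be) $$ (r0, c0) = (\<Sum>r\<in>{0..<dd (s al)}. Mx al $$ (r0, r) * Mx be $$ (r, c0))"
      by (rule mult_entry[OF Mx_carrier cb r0' c0'])
    also have "\<dots> = (\<Sum>r\<in>{0..<dd (s al)}. (0::'k))"
    proof (rule sum.cong[OF refl])
      fix r assume r: "r \<in> {0..<dd (s al)}"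
      show "(Mx al :: 'k mat) $$ (r0, r) * Mx be $$ (r, c0) = 0"
      proof (rule ccontr)
        assume ne: "(Mx al :: 'k mat) $$ (r0, r) * Mx be $$ (r, c0) \<noteq> 0"
        have r': "r < dd (t be)" using r c by simp
        have m1: "mv be (enum (s be) c0) = Some (enum (t be) r)"
          using ne r' c0' by (auto simp: Mx_def split: if_splits)
        have m2: "mv al (enum (s al) r) = Some (enum (t al) r0)"
          using ne r r0' by (auto simp: Mx_def split: if_splits)
        have i: "enum (s be) c0 \<le> length ls" using enum_props[OF c0'] by (simp add: Pset_def)
        show False using no_rel_path[OF i m1, of al] m2 c x ab by simp
      qed
    qed
    also have "\<dots> = 0\<^sub>m (dd (t al)) (dd (s be)) $$ (r0, c0)" using r0' c0' by simp
    finally show "((Mx al :: 'k mat) * Mx be) $$ (r0, c0) = 0\<^sub>m (dd (t al)) (dd (s be)) $$ (r0, c0)" .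
  qed (auto simp: Mx_def)
  then show "case x of (al, be) \<Rightarrow> (Mx al :: 'k mat) * Mx be = 0\<^sub>m (dd (t al)) (dd (s be))"
    using ab by simp
qed

end


context smod begin

lemma Fp_entry: "v \<in> V \<Longrightarrow> r < dd v \<Longrightarrow> c < dd v \<Longrightarrow> f v $$ (r, c) = Fp f (enum v r) (enum v c)"
  using enum_props[of r v] enum_props[of c v] by (auto simp: Fp_def Pset_def)

lemma Mx_indec: "indecomposable_rep V Arr s t dd (Mx :: 'a \<Rightarrow> 'k::field mat)"
  unfolding indecomposable_rep_def
proof (intro conjI allI impI)
  have "0 \<in> Pset (p 0)" by (simp add: Pset_def)
  then have "dd (p 0) > 0" unfolding dd_def by (auto simp: card_gt_0_iff)
  then show "\<exists>v\<in>V. 0 < dd v" using p_in_V[of 0] by auto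
next
  fix e :: "'v \<Rightarrow> 'k mat"
  assume a: "is_endo V Arr s t dd Mx e \<and> (\<forall>v\<in>V. e v * e v = e v)"
  have PC: "PC (Fp e)" using endo_PC a by blast
  have car: "\<And>v. v \<in> V \<Longrightarrow> e v \<in> carrier_mat (dd v) (dd v)" using a unfolding is_endo_def by auto
  have idem: "Fp e k i = (\<Sum>j\<in>Pset (p i). Fp e k j * Fp e j i)"
    if ik: "i \<le> length ls" "k \<le> length ls" "p k = p i" for i k
  proof -
    let ?v = "p i"
    have v: "?v \<in> V" using p_in_V ik by simp
    have iP: "i \<in> Pset ?v" and kP: "k \<in> Pset ?v" using ik by (auto simp: Pset_def)
    have "Fp e k i = (e ?v * e ?v) $$ (idx k, idx i)" using a v ik by (simp add: Fp_def)
    also have "\<dots> = (\<Sum>j\<in>Pset ?v. e ?v $$ (idx k, idx j) * e ?v $$ (idx j, idx i))"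
      by (rule prod_entry[OF car[OF v] car[OF v] kP iP])
    also have "\<dots> = (\<Sum>j\<in>Pset ?v. Fp e k j * Fp e j i)"
      by (rule sum.cong[OF refl]) (use ik in \<open>auto simp: Fp_def Pset_def\<close>)
    finally show ?thesis .
  qed
  note cases = idem_cases[OF PC idem]
  show "(\<forall>v\<in>V. e v = 0\<^sub>m (dd v) (dd v)) \<or> (\<forall>v\<in>V. e v = 1\<^sub>m (dd v))"
  proof (rule disjE[OF cases])
    assume z: "\<forall>i k. i \<le> length ls \<longrightarrow> k \<le> length ls \<longrightarrow> p k = p i \<longrightarrow> Fp e k i = 0"
    have "e v = 0\<^sub>m (dd v) (dd v)" if v: "v \<in> V" for v
    proof (rule eq_matI)
      fix r c assume "r < dim_row (0\<^sub>m (dd v) (dd v) :: 'k mat)" "c < dim_col (0\<^sub>m (dd v) (dd v) :: 'k mat)"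
      then have r: "r < dd v" and c: "c < dd v" by auto
      have "enum v r \<in> Pset v" "enum v c \<in> Pset v" using enum_props r c by auto
      then show "e v $$ (r, c) = 0\<^sub>m (dd v) (dd v) $$ (r, c)"
        using Fp_entry[OF v r c, of e] z r c by (auto simp: Pset_def)
    qed (use car[OF v] in auto)
    then show ?thesis by blast
  next
    assume z: "\<forall>i k. i \<le> length ls \<longrightarrow> k \<le> length ls \<longrightarrow> p k = p i \<longrightarrow> Fp e k i = (if k = i then 1 else 0)"
    have "e v = 1\<^sub>m (dd v)" if v: "v \<in> V" for v
    proof (rule eq_matI)
      fix r c assume "r < dim_row (1\<^sub>m (dd v) :: 'k mat)" "c < dim_col (1\<^sub>m (dd v) :: 'k mat)"
      then have r: "r < dd v" and c: "c < dd v" by auto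
      have "enum v r \<in> Pset v" "enum v c \<in> Pset v" using enum_props r c by auto
      then show "e v $$ (r, c) = 1\<^sub>m (dd v) $$ (r, c)"
        using Fp_entry[OF v r c, of e] z r c enum_inj[OF r c] by (auto simp: Pset_def)
    qed (use car[OF v] in auto)
    then show ?thesis by blast
  qed
qed

end


locale cmod = smod V Arr s t Rel ls
  for V :: "'v set" and Arr :: "'a set" and s t :: "'a \<Rightarrow> 'v" and Rel :: "('a \<times> 'a) set"
    and ls :: "('a \<times> bool) list" +
  fixes U :: "('a \<times> bool) list" and l :: "'a \<times> bool" and W :: "('a \<times> bool) list"
  assumes lsdef: "ls = U @ [l] @ W" and ldir: "snd l" and Wdef: "W = U \<or> W = rev (map lflip U)"
    and loop: "U = [] \<Longrightarrow> lsrc s t l = ltgt s t l"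
begin

abbreviation "m \<equiv> length U"

lemma lenW: "length W = m" using Wdef by auto

lemma len: "length ls = Suc (2 * m)" using lenW lsdef by simp

lemma ls_nth: "q < length ls \<Longrightarrow> ls ! q = (if q < m then U ! q else if q = m then l else W ! (q - Suc m))"
  unfolding lsdef by (auto simp: nth_append)

lemma W_nth: "q < m \<Longrightarrow> W ! q = (if W = U then U ! q else lflip (U ! (m - Suc q)))"
  using Wdef by (auto simp: rev_nth)

definition sg :: "nat \<Rightarrow> nat" where
  "sg i = (if W = U then i + Suc m else Suc (2 * m) - i)"

definition tau :: "bool \<Rightarrow> bool" where
  "tau dr = (if W = U then dr else \<not> dr)"

lemma sg1: "W = U \<Longrightarrow> sg i = i + Suc m" and sg2: "W \<noteq> U \<Longrightarrow> sg i = Suc (2 * m) - i"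
  and tau1: "W = U \<Longrightarrow> tau dr = dr" and tau2: "W \<noteq> U \<Longrightarrow> tau dr = (\<not> dr)"
  unfolding sg_def tau_def by auto

lemma sym_uT: "i < m \<Longrightarrow> sym i True 0 = Some (U ! i)"
  using ls_nth[of i] len by (simp add: sym_def)
lemma sym_uF: "0 < i \<Longrightarrow> i \<le> m \<Longrightarrow> sym i False 0 = Some (lflip (U ! (i - 1)))"
proof -
  assume a: "0 < i" "i \<le> m"
  then have h: "i - 1 < m" by simp
  then have "ls ! (i - 1) = U ! (i - 1)" using ls_nth[of "i - 1"] len by simp
  then show ?thesis using a by (simp add: sym_def)
qed
lemma symA: "W = U \<Longrightarrow> i < m \<Longrightarrow> sym (i + Suc m) True 0 = Some (U ! i)"
  using ls_nth[of "i + Suc m"] len W_nth[of i] by (simp add: sym_def)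
lemma symB: "W = U \<Longrightarrow> 0 < i \<Longrightarrow> i \<le> m \<Longrightarrow> sym (i + Suc m) False 0 = Some (lflip (U ! (i - 1)))"
  using ls_nth[of "i + m"] len W_nth[of "i - 1"] by (simp add: sym_def)
lemma symC: "W \<noteq> U \<Longrightarrow> i < m \<Longrightarrow> sym (Suc (2 * m) - i) False 0 = Some (U ! i)"
proof -
  assume a: "W \<noteq> U" "i < m"
  have "ls ! (2 * m - i) = W ! (m - Suc i)" using ls_nth[of "2 * m - i"] a len by auto
  also have "\<dots> = lflip (U ! i)" using W_nth[of "m - Suc i"] a by auto
  finally have "ls ! (2 * m - i) = lflip (U ! i)" .
  moreover have "Suc (2 * m) - i - 0 - 1 = 2 * m - i" using a by simp
  ultimately show ?thesis using a by (simp add: sym_def)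
qed
lemma symD: "W \<noteq> U \<Longrightarrow> 0 < i \<Longrightarrow> i \<le> m \<Longrightarrow> sym (Suc (2 * m) - i) True 0 = Some (lflip (U ! (i - 1)))"
proof -
  assume a: "W \<noteq> U" "0 < i" "i \<le> m"
  have "ls ! (Suc (2 * m) - i) = W ! (m - i)" using ls_nth[of "Suc (2 * m) - i"] a len by auto
  also have "\<dots> = lflip (U ! (i - 1))" using W_nth[of "m - i"] a by auto
  finally show ?thesis using a len by (simp add: sym_def)
qed

lemma sg_range: "i \<le> m \<Longrightarrow> sg i \<le> length ls \<and> m < sg i"
  by (auto simp: sg_def len)

lemma corr_in:
  assumes i: "i \<le> m" and c: "sym i dr 0 = Some c" and ins: "np i dr \<le> m"
  shows "sym (sg i) (tau dr) 0 = Some c \<and> np (sg i) (tau dr) = sg (np i dr)"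
proof (cases dr)
  case dT: True
  then have im: "i < m" using ins by (simp add: np_def)
  have cc: "c = U ! i" using c dT sym_uT[OF im] by simp
  have npi: "np i dr = Suc i" using dT by (simp add: np_def)
  show ?thesis
  proof (cases "W = U")
    case True
    show ?thesis unfolding sg1[OF True] tau1[OF True] npi using symA[OF True im] cc dT by (simp add: np_def)
  next
    case False
    show ?thesis unfolding sg2[OF False] tau2[OF False] npi using symC[OF False im] cc dT im by (simp add: np_def)
  qed
next
  case dF: False
  then have i0: "0 < i" using c by (auto simp: sym_def split: if_splits)
  have cc: "c = lflip (U ! (i - 1))" using c dF sym_uF[OF i0 i] by simp
  have npi: "np i dr = i - 1" using dF by (simp add: np_def)
  show ?thesis
  proof (cases "W = U")
    case True
    show ?thesis unfolding sg1[OF True] tau1[OF True] npi using symB[OF True i0 i] cc dF i0 by (simp add: np_def)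
  next
    case False
    show ?thesis unfolding sg2[OF False] tau2[OF False] npi using symD[OF False i0 i] cc dF i0 i by (simp add: np_def)
  qed
qed

lemma corr_out:
  assumes i: "i \<le> m" and out: "sym i dr 0 = None \<or> m < np i dr"
  shows "sym (sg i) (tau dr) 0 \<noteq> Some (a, True)"
proof -
  have lm: "ls ! m = l" using ls_nth[of m] len by simp
  have "(dr \<and> i = m) \<or> (\<not> dr \<and> i = 0)" using out i
    by (auto simp: sym_def np_def len split: if_splits)
  then show ?thesis
  proof
    assume a: "dr \<and> i = m"
    show ?thesis
    proof (cases "W = U")
      case True
      have "sg i = Suc (2 * m)" "tau dr = True" using sg1[OF True] tau1[OF True] a by auto
      then show ?thesis using len by (simp add: sym_def)
    next
      case False
      have "sg i = Suc m" "tau dr = False" using sg2[OF False] tau2[OF False] a by auto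
      then show ?thesis using lm ldir by (simp add: sym_def lflip_def)
    qed
  next
    assume a: "\<not> dr \<and> i = 0"
    show ?thesis
    proof (cases "W = U")
      case True
      have "sg i = Suc m" "tau dr = False" using sg1[OF True] tau1[OF True] a by auto
      then show ?thesis using lm ldir by (simp add: sym_def lflip_def)
    next
      case False
      have "sg i = Suc (2 * m)" "tau dr = True" using sg2[OF False] tau2[OF False] a by auto
      then show ?thesis using len by (simp add: sym_def)
    qed
  qed
qed

lemma tau_tau[simp]: "tau (tau dr) = dr" by (simp add: tau_def)

lemma corr_L2:
  assumes i: "i \<le> m" and c: "sym (sg i) dr' 0 = Some (a, True)"
  shows "sym i (tau dr') 0 = Some (a, True) \<and> np i (tau dr') \<le> m \<and> np (sg i) dr' = sg (np i (tau dr'))"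
proof -
  have h1: "sym i (tau dr') 0 \<noteq> None"
  proof
    assume "sym i (tau dr') 0 = None"
    then show False using corr_out[OF i, of "tau dr'" a] c by simp
  qed
  have h2: "np i (tau dr') \<le> m"
  proof (rule ccontr)
    assume "\<not> np i (tau dr') \<le> m"
    then show False using corr_out[OF i, of "tau dr'" a] c by simp
  qed
  have in1: "sym i (tau dr') 0 \<noteq> None \<and> np i (tau dr') \<le> m" using h1 h2 by blast
  then obtain c' where c': "sym i (tau dr') 0 = Some c'" by auto
  from corr_in[OF i c'] in1 have "sym (sg i) dr' 0 = Some c' \<and> np (sg i) dr' = sg (np i (tau dr'))" by simp
  then show ?thesis using c c' in1 by simp
qed

lemma L3:
  assumes i: "i \<le> length ls" "m < i" and c: "sym i dr 0 = Some (a, True)"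
  shows "m < np i dr"
proof (rule ccontr)
  assume "\<not> m < np i dr"
  then have "\<not> dr" "i = Suc m" using i c by (auto simp: np_def sym_def split: if_splits)
  moreover have "ls ! m = l" using ls_nth[of m] len by simp
  ultimately show False using c ldir by (simp add: sym_def lflip_def)
qed

lemma p_sg: "i \<le> m \<Longrightarrow> p (sg i) = p i"
proof -
  assume i: "i \<le> m"
  show ?thesis
  proof (cases "m = 0")
    case True
    then have i0: "i = 0" and U0: "U = []" using i by auto
    have "ls ! 0 = l" using ls_nth[of 0] len True by simp
    moreover have "sg 0 = 1" unfolding sg_def using True by simp
    ultimately show ?thesis using i0 loop[OF U0] p_prev[of 1] len by (simp add: p_def)
  next
    case False
    obtain dr where dr: "sym i dr 0 \<noteq> None \<and> np i dr \<le> m"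
    proof (cases "i < m")
      case True
      then show ?thesis using that[of True] len by (auto simp: sym_def np_def)
    next
      case False
      then have "0 < i" using \<open>m \<noteq> 0\<close> i by auto
      then show ?thesis using that[of False] i by (auto simp: sym_def np_def)
    qed
    then obtain c where c: "sym i dr 0 = Some c" by auto
    have "sym (sg i) (tau dr) 0 = Some c" using corr_in[OF i c] dr by simp
    then show ?thesis using sym_p[OF _ c] sym_p[of "sg i" "tau dr" c] sg_range[OF i] i len by simp
  qed
qed

definition Phi :: "nat \<Rightarrow> nat \<Rightarrow> 'k::field" where
  "Phi j i = (if i \<le> m \<and> j = sg i then 1 else 0)"

lemma Phi_PC: "PC (Phi :: nat \<Rightarrow> nat \<Rightarrow> 'k::field)"
  unfolding PC_def
proof (intro allI impI)
  fix a i k assume a: "a \<in> Arr" and i: "i \<le> length ls" and k: "k \<le> length ls" and pi: "p i = s a" and pk: "p k = t a"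
  have R: "optF (mvinv a k) (\<lambda>j. (Phi j i :: 'k)) = (if i \<le> m \<and> mv a (sg i) = Some k then 1 else 0)"
  proof (cases "i \<le> m")
    case True
    have "mvinv a k = Some (sg i) \<longleftrightarrow> mv a (sg i) = Some k"
      using mvinv_mv[OF k] mv_mvinv[of "sg i"] sg_range[OF True] by blast
    then show ?thesis using True by (cases "mvinv a k") (auto simp: Phi_def)
  next
    case False then show ?thesis by (cases "mvinv a k") (auto simp: Phi_def)
  qed
  have eq: "(\<exists>i'. mv a i = Some i' \<and> i' \<le> m \<and> k = sg i') \<longleftrightarrow> (i \<le> m \<and> mv a (sg i) = Some k)"
  proof
    assume "\<exists>i'. mv a i = Some i' \<and> i' \<le> m \<and> k = sg i'"
    then obtain i' where i': "mv a i = Some i'" "i' \<le> m" "k = sg i'" by blast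
    then obtain dr where dr: "sym i dr 0 = Some (a, True)" "i' = np i dr" using i by (auto simp: mv_iff)
    have im: "i \<le> m" using L3[OF i _ dr(1)] dr i' by (meson not_le_imp_less not_less)
    have "sym (sg i) (tau dr) 0 = Some (a, True) \<and> np (sg i) (tau dr) = sg i'"
      using corr_in[OF im dr(1)] dr i' by simp
    then show "i \<le> m \<and> mv a (sg i) = Some k" using im sg_range[OF im] i' by (auto simp: mv_iff)
  next
    assume h: "i \<le> m \<and> mv a (sg i) = Some k"
    then obtain dr' where dr': "sym (sg i) dr' 0 = Some (a, True)" "k = np (sg i) dr'"
      using sg_range[of i] by (auto simp: mv_iff)
    note L2 = corr_L2[OF conjunct1[OF h] dr'(1)]
    then show "\<exists>i'. mv a i = Some i' \<and> i' \<le> m \<and> k = sg i'"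
      using dr' i by (auto simp: mv_iff)
  qed
  have L: "optF (mv a i) (\<lambda>j. (Phi k j :: 'k)) = (if \<exists>i'. mv a i = Some i' \<and> i' \<le> m \<and> k = sg i' then 1 else 0)"
    by (cases "mv a i") (auto simp: Phi_def)
  show "optF (mv a i) ((Phi :: nat \<Rightarrow> nat \<Rightarrow> 'k) k) = optF (mvinv a k) (\<lambda>j. Phi j i)"
    unfolding R using L eq by simp
qed

lemma not_division: "\<not> endo_division V Arr s t dd (Mx :: 'a \<Rightarrow> 'k::field mat)"
proof
  assume ed: "endo_division V Arr s t dd (Mx :: 'a \<Rightarrow> 'k mat)"
  define f :: "'v \<Rightarrow> 'k mat" where "f = mk Phi"
  have en: "is_endo V Arr s t dd Mx f" unfolding f_def by (rule PC_endo[OF Phi_PC])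
  define v where "v = p 0"
  have v: "v \<in> V" using p_in_V[of 0] by (simp add: v_def)
  have P0: "0 \<in> Pset v" by (simp add: Pset_def v_def)
  have P1: "sg 0 \<in> Pset v" using sg_range[of 0] p_sg[of 0] by (simp add: Pset_def v_def)
  have "f v $$ (idx (sg 0), idx 0) = (Phi (sg 0) 0 :: 'k)" unfolding f_def by (rule mk_entry[OF P1 P0])
  then have f1: "f v $$ (idx (sg 0), idx 0) = 1" by (simp add: Phi_def)
  have fne: "f v \<noteq> 0\<^sub>m (dd v) (dd v)"
  proof
    assume "f v = 0\<^sub>m (dd v) (dd v)"
    moreover have "idx (sg 0) < dd v" "idx 0 < dd v" using idx_props P0 P1 by auto
    ultimately show False using f1 by simp
  qed
  obtain g where g: "is_endo V Arr s t dd Mx g" "\<forall>v\<in>V. f v * g v = 1\<^sub>m (dd v) \<and> g v * f v = 1\<^sub>m (dd v)"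
    using ed en fne v unfolding endo_division_def by blast
  have cf: "f v \<in> carrier_mat (dd v) (dd v)" by (simp add: f_def mk_def)
  have cg: "g v \<in> carrier_mat (dd v) (dd v)" using g(1) v unfolding is_endo_def by auto
  have ff: "f v * f v = 0\<^sub>m (dd v) (dd v)"
  proof (rule eq_matI)
    fix r c assume "r < dim_row (0\<^sub>m (dd v) (dd v) :: 'k mat)" "c < dim_col (0\<^sub>m (dd v) (dd v) :: 'k mat)"
    then have r: "r < dd v" and c: "c < dd v" by auto
    define k where "k = enum v r"
    define i where "i = enum v c"
    have kP: "k \<in> Pset v" "idx k = r" and iP: "i \<in> Pset v" "idx i = c"
      using enum_props[OF r] enum_props[OF c] k_def i_def by auto
    have "(f v * f v) $$ (idx k, idx i) = (\<Sum>j\<in>Pset v. f v $$ (idx k, idx j) * f v $$ (idx j, idx i))"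
      by (rule prod_entry[OF cf cf kP(1) iP(1)])
    also have "\<dots> = (\<Sum>j\<in>Pset v. (0::'k))"
    proof (rule sum.cong[OF refl])
      fix j assume j: "j \<in> Pset v"
      have "f v $$ (idx k, idx j) * f v $$ (idx j, idx i) = Phi k j * Phi j i"
        unfolding f_def by (simp only: mk_entry[OF kP(1) j] mk_entry[OF j iP(1)])
      also have "\<dots> = 0"
      proof (cases "i \<le> m \<and> j = sg i")
        case True
        then have "m < j" using sg_range by auto
        then show ?thesis by (simp add: Phi_def)
      qed (simp add: Phi_def)
      finally show "f v $$ (idx k, idx j) * f v $$ (idx j, idx i) = 0" .
    qed
    finally show "(f v * f v) $$ (r, c) = 0\<^sub>m (dd v) (dd v) $$ (r, c)" using kP iP r c by simp
  qed (auto simp: f_def mk_def)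
  have "f v = f v * 1\<^sub>m (dd v)" using cf by simp
  also have "\<dots> = f v * (f v * g v)" using g(2) v by simp
  also have "\<dots> = (f v * f v) * g v" using cf cg by (simp add: assoc_mult_mat)
  also have "\<dots> = 0\<^sub>m (dd v) (dd v)" using ff cg by simp
  finally show False using fne by simp
qed

end


lemma bg_facts:
  assumes bg: "brick_gentle TYPE('k::field) V Arr s t Rel"
  shows "\<And>a. a \<in> Arr \<Longrightarrow> s a \<in> V \<and> t a \<in> V"
    and "\<And>al be. (al, be) \<in> Rel \<Longrightarrow> al \<in> Arr \<and> be \<in> Arr \<and> t be = s al"
    and "finite Arr"
    and "\<And>d (M :: 'a \<Rightarrow> 'k mat). is_rep V Arr s t Rel d M \<Longrightarrow> indecomposable_rep V Arr s t d M \<Longrightarrow> endo_division V Arr s t d M"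
proof -
  have g: "gentle V Arr s t Rel" and b4: "\<forall>d (M :: 'a \<Rightarrow> 'k mat). is_rep V Arr s t Rel d M \<and> indecomposable_rep V Arr s t d M \<longrightarrow>
        endo_division V Arr s t d M" using bg unfolding brick_gentle_def by simp_all
  have bq: "bound_quiver V Arr s t Rel" using g unfolding gentle_def by simp
  then have q1: "\<forall>a\<in>Arr. s a \<in> V \<and> t a \<in> V" and q2: "\<forall>(al, be)\<in>Rel. al \<in> Arr \<and> be \<in> Arr \<and> composable s t al be"
    and q3: "finite Arr" unfolding bound_quiver_def by simp_all
  show "\<And>a. a \<in> Arr \<Longrightarrow> s a \<in> V \<and> t a \<in> V" using q1 by blast
  show "\<And>al be. (al, be) \<in> Rel \<Longrightarrow> al \<in> Arr \<and> be \<in> Arr \<and> t be = s al" using q2 unfolding composable_def by blast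
  show "finite Arr" by (rule q3)
  show "\<And>d (M :: 'a \<Rightarrow> 'k mat). is_rep V Arr s t Rel d M \<Longrightarrow> indecomposable_rep V Arr s t d M \<Longrightarrow> endo_division V Arr s t d M"
    using b4 by blast
qed

lemma CL_core:
  fixes V :: "'v set" and Arr :: "'a set" and s t :: "'a \<Rightarrow> 'v" and Rel :: "('a \<times> 'a) set"
  assumes bg: "brick_gentle TYPE('k::field) V Arr s t Rel"
    and str: "is_string V Arr s t Rel (Word (U @ [l] @ W))" and ld: "snd l"
    and Wd: "W = U \<or> W = rev (map lflip U)" and lp: "U = [] \<Longrightarrow> lsrc s t l = ltgt s t l"
  shows False
proof -
  interpret cmod V Arr s t Rel "U @ [l] @ W" U l W
    by unfold_locales (use bg_facts(1)[OF bg] str ld Wd lp in auto)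
  have rep: "is_rep V Arr s t Rel dd (Mx :: 'a \<Rightarrow> 'k mat)" by (rule Mx_rep) (use bg_facts(2)[OF bg] in blast)
  have ind: "indecomposable_rep V Arr s t dd (Mx :: 'a \<Rightarrow> 'k mat)" by (rule Mx_indec)
  have e: "endo_division V Arr s t dd (Mx :: 'a \<Rightarrow> 'k mat)" by (rule bg_facts(4)[OF bg rep ind])
  have ne: "\<not> endo_division V Arr s t dd (Mx :: 'a \<Rightarrow> 'k mat)" by (rule not_division)
  from ne e show False by (rule notE)
qed

lemma letters_empty: "is_string V Arr s t Rel u \<Longrightarrow> letters u = [] \<Longrightarrow> \<exists>v0. u = Triv v0"
  by (cases u) (auto simp: is_string_def)

lemma CL:
  fixes V :: "'v set" and Arr :: "'a set" and s t :: "'a \<Rightarrow> 'v" and Rel :: "('a \<times> 'a) set"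
  assumes bg: "brick_gentle TYPE('k::field) V Arr s t Rel"
    and rc: "raw_concat V Arr s t Rel x u v" and uv: "v = u \<or> v = inv_str u"
  shows False
proof -
  obtain l where l: "fst l \<in> Arr" "lsrc s t l = str_tgt s t u" "ltgt s t l = str_src s t v"
    "x = Word (letters u @ [l] @ letters v)" and sx: "is_string V Arr s t Rel x"
    and su: "is_string V Arr s t Rel u" and sv: "is_string V Arr s t Rel v"
    using rc unfolding raw_concat_def by blast
  have loop: "lsrc s t l = ltgt s t l" if lu: "letters u = []"
  proof -
    obtain v0 where u0: "u = Triv v0" using letters_empty[OF su lu] by blast
    then have "v = Triv v0" using uv by auto
    then show ?thesis using l u0 by simp
  qed
  have Wd: "letters v = letters u \<or> letters v = rev (map lflip (letters u))"
    using uv letters_inv_str by auto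
  show False
  proof (cases "snd l")
    case True
    have sx0: "is_string V Arr s t Rel (Word (letters u @ [l] @ letters v))" using sx l(4) by simp
    show False by (rule CL_core[OF bg sx0 True Wd loop])
  next
    case False
    have sx': "is_string V Arr s t Rel (Word (letters (inv_str v) @ [lflip l] @ letters (inv_str u)))"
      using is_string_inv[OF sx] l by (simp add: flip_lam letters_inv_str)
    have Wd': "letters (inv_str u) = letters (inv_str v) \<or>
        letters (inv_str u) = rev (map lflip (letters (inv_str v)))"
      using uv by (auto simp: letters_inv_str rev_map comp_def)
    have loop': "lsrc s t (lflip l) = ltgt s t (lflip l)" if lv: "letters (inv_str v) = []"
    proof -
      have "letters v = []" using lv by (simp add: letters_inv_str)
      then obtain v0 where v0: "v = Triv v0" using letters_empty[OF sv] by blast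
      then have "u = Triv v0" using uv by (cases u) auto
      then show ?thesis using l v0 by simp
    qed
    have ld': "snd (lflip l)" using False by simp
    show False by (rule CL_core[OF bg sx' ld' Wd' loop'])
  qed
qed

lemma str_class_cases: "u \<in> str_class w \<Longrightarrow> v \<in> str_class w \<Longrightarrow> v = u \<or> v = inv_str u"
  by (auto simp: str_class_def)

lemma no_self_concat:
  assumes bg: "brick_gentle TYPE('k::field) V Arr s t Rel" and w: "w \<in> Str V Arr s t Rel"
  shows "\<not> is_concat V Arr s t Rel c w w"
proof
  assume "is_concat V Arr s t Rel c w w"
  then obtain x u v where "u \<in> w" "v \<in> w" "raw_concat V Arr s t Rel x u v" by (auto simp: is_concat_def)
  moreover obtain w0 where "w = str_class w0" using w by (auto simp: Str_def)
  ultimately show False using CL[OF bg] str_class_cases by metis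
qed

lemma part1:
  assumes bg: "brick_gentle TYPE('k::field) V Arr s t Rel" and w: "w \<in> Str V Arr s t Rel"
  shows "str_closure V Arr s t Rel {w} = {w}"
proof -
  have "str_closed V Arr s t Rel {w}"
    unfolding str_closed_def using no_self_concat[OF bg w] by blast
  then have "{w} \<in> {Y. {w} \<subseteq> Y \<and> Y \<subseteq> Str V Arr s t Rel \<and> str_closed V Arr s t Rel Y}" using w by auto
  then show ?thesis unfolding str_closure_def by blast
qed



lemma succ_take: "successively P xs \<Longrightarrow> successively P (take k xs)"
  by (metis append_take_drop_id successively_append_iff)
lemma succ_drop: "successively P xs \<Longrightarrow> successively P (drop k xs)"
  by (metis append_take_drop_id successively_append_iff)

lemma is_string_take: "is_string V Arr s t Rel (Word ls) \<Longrightarrow> 0 < k \<Longrightarrow> is_string V Arr s t Rel (Word (take k ls))"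
  unfolding is_string_Word using succ_take[of _ ls k] set_take_subset[of k ls] by auto

lemma is_string_drop: "is_string V Arr s t Rel (Word ls) \<Longrightarrow> k < length ls \<Longrightarrow> is_string V Arr s t Rel (Word (drop k ls))"
  unfolding is_string_Word using succ_drop[of _ ls k] set_drop_subset[of k ls] by auto

lemma str_adj: "is_string V Arr s t Rel (Word ls) \<Longrightarrow> Suc i < length ls \<Longrightarrow> lsrc s t (ls ! Suc i) = ltgt s t (ls ! i)"
  unfolding is_string_Word successively_conv_nth adj_ok_def by blast

lemma str_arr: "is_string V Arr s t Rel (Word ls) \<Longrightarrow> i < length ls \<Longrightarrow> fst (ls ! i) \<in> Arr"
  unfolding is_string_Word by auto

lemma lsrc_V: "(\<And>a. a \<in> Arr \<Longrightarrow> s a \<in> V \<and> t a \<in> V) \<Longrightarrow> fst c \<in> Arr \<Longrightarrow> lsrc s t c \<in> V \<and> ltgt s t c \<in> V"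
  by (auto simp: lsrc_def ltgt_def)

lemma split_strings:
  assumes E: "\<And>a. a \<in> Arr \<Longrightarrow> s a \<in> V \<and> t a \<in> V" and st: "is_string V Arr s t Rel (Word ls)"
    and j: "1 \<le> j" "j \<le> length ls"
  shows "is_string V Arr s t Rel (split_low s t ls j) \<and> is_string V Arr s t Rel (split_high s t ls j)"
proof
  show "is_string V Arr s t Rel (split_low s t ls j)"
  proof (cases "j = 1")
    case True
    have "fst (ls ! 0) \<in> Arr" using str_arr[OF st, of 0] j by (cases ls) auto
    then have "lsrc s t (ls ! 0) \<in> V" using E[of "fst (ls ! 0)"] by (auto simp: lsrc_def)
    then show ?thesis using True by (simp add: split_low_def is_string_Triv)
  next
    case False then show ?thesis using is_string_take[OF st, of "j - 1"] j by (simp add: split_low_def)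
  qed
  show "is_string V Arr s t Rel (split_high s t ls j)"
  proof (cases "j = length ls")
    case True
    have "fst (ls ! (length ls - 1)) \<in> Arr" using str_arr[OF st, of "length ls - 1"] j by simp
    then have "ltgt s t (ls ! (length ls - 1)) \<in> V" using E[of "fst (ls ! (length ls - 1))"] by (auto simp: ltgt_def)
    moreover have "last ls = ls ! (length ls - 1)" using j by (intro last_conv_nth) auto
    ultimately show ?thesis using True j by (simp add: split_high_def is_string_Triv)
  next
    case False then show ?thesis using is_string_drop[OF st, of j] j by (simp add: split_high_def)
  qed
qed

lemma letters_split_low: "1 \<le> j \<Longrightarrow> letters (split_low s t ls j) = take (j - 1) ls"
  by (simp add: split_low_def)

lemma letters_split_high: "j \<le> length ls \<Longrightarrow> letters (split_high s t ls j) = drop j ls"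
  by (simp add: split_high_def)

lemma str_src_Word: "ls \<noteq> [] \<Longrightarrow> str_src s t (Word ls) = lsrc s t (ls ! 0)"
  by (simp add: hd_conv_nth)

lemma break_concat:
  assumes E: "\<And>a. a \<in> Arr \<Longrightarrow> s a \<in> V \<and> t a \<in> V" and st: "is_string V Arr s t Rel (Word ls)"
    and j: "1 \<le> j" "j \<le> length ls"
  shows "raw_concat V Arr s t Rel (Word ls) (split_low s t ls j) (split_high s t ls j)"
  unfolding raw_concat_def
proof (intro conjI exI[of _ "ls ! (j - 1)"])
  show "is_string V Arr s t Rel (Word ls)" by (rule st)
  show "is_string V Arr s t Rel (split_low s t ls j)" "is_string V Arr s t Rel (split_high s t ls j)"
    using split_strings[OF E st j] by auto
  show "fst (ls ! (j - 1)) \<in> Arr" using str_arr[OF st] j by simp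
  show "lsrc s t (ls ! (j - 1)) = str_tgt s t (split_low s t ls j)"
  proof (cases "j = 1")
    case True then show ?thesis by (simp add: split_low_def)
  next
    case False
    then have tn: "take (j - 1) ls \<noteq> []" "length (take (j - 1) ls) = j - 1" using j by auto
    then have "last (take (j - 1) ls) = take (j - 1) ls ! (j - 2)" by (simp add: last_conv_nth numeral_2_eq_2)
    also have "\<dots> = ls ! (j - 2)" using j False by (simp add: numeral_2_eq_2)
    finally have "last (take (j - 1) ls) = ls ! (j - 2)" .
    moreover have "Suc (j - 2) = j - 1" using False j by simp
    ultimately show ?thesis using False str_adj[OF st, of "j - 2"] j by (simp add: split_low_def)
  qed
  show "ltgt s t (ls ! (j - 1)) = str_src s t (split_high s t ls j)"
  proof (cases "j = length ls")
    case True
    have "ls \<noteq> []" using j by auto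
    then show ?thesis using True by (simp add: split_high_def last_conv_nth)
  next
    case False
    then have "hd (drop j ls) = ls ! j" using j by (simp add: hd_drop_conv_nth)
    then show ?thesis using False str_adj[OF st, of "j - 1"] j by (simp add: split_high_def)
  qed
  show "Word ls = Word (letters (split_low s t ls j) @ [ls ! (j - 1)] @ letters (split_high s t ls j))"
  proof -
    have "ls = take (j - 1) ls @ ls ! (j - 1) # drop (Suc (j - 1)) ls" by (rule id_take_nth_drop) (use j in simp)
    moreover have "Suc (j - 1) = j" using j by simp
    ultimately show ?thesis using j by (simp add: letters_split_low letters_split_high)
  qed
qed

lemma Word_letters: "is_string V Arr s t Rel u \<Longrightarrow> letters u \<noteq> [] \<Longrightarrow> u = Word (letters u)"
  by (cases u) auto

lemma concat_break:
  assumes rc: "raw_concat V Arr s t Rel x u v"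
  shows "1 \<le> Suc (length (letters u)) \<and> Suc (length (letters u)) \<le> length (letters x) \<and>
    split_low s t (letters x) (Suc (length (letters u))) = u \<and>
    split_high s t (letters x) (Suc (length (letters u))) = v"
proof -
  obtain l where l: "fst l \<in> Arr" "lsrc s t l = str_tgt s t u" "ltgt s t l = str_src s t v"
    "x = Word (letters u @ [l] @ letters v)" and su: "is_string V Arr s t Rel u" and sv: "is_string V Arr s t Rel v"
    using rc unfolding raw_concat_def by blast
  let ?j = "Suc (length (letters u))"
  have lx: "letters x = letters u @ [l] @ letters v" using l by simp
  have low: "split_low s t (letters x) ?j = u"
  proof (cases "letters u = []")
    case True
    then obtain v0 where "u = Triv v0" using letters_empty[OF su] by blast
    then show ?thesis using True l lx by (simp add: split_low_def)
  next
    case False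
    then show ?thesis using Word_letters[OF su False] lx by (simp add: split_low_def)
  qed
  have high: "split_high s t (letters x) ?j = v"
  proof (cases "letters v = []")
    case True
    then obtain v0 where "v = Triv v0" using letters_empty[OF sv] by blast
    then show ?thesis using True l lx by (simp add: split_high_def)
  next
    case False
    then show ?thesis using Word_letters[OF sv False] lx by (simp add: split_high_def)
  qed
  show ?thesis using low high lx by simp
qed

lemma str_tgt_inv: "is_string V Arr s t Rel w \<Longrightarrow> str_tgt s t (inv_str w) = str_src s t w"
  by (cases w) (auto simp: is_string_def flip_lam last_rev hd_map)

lemma str_src_inv: "is_string V Arr s t Rel w \<Longrightarrow> str_src s t (inv_str w) = str_tgt s t w"
  by (cases w) (auto simp: is_string_def flip_lam hd_rev last_map)

lemma raw_concat_inv: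
  assumes rc: "raw_concat V Arr s t Rel x u v"
  shows "raw_concat V Arr s t Rel (inv_str x) (inv_str v) (inv_str u)"
proof -
  obtain l where l: "fst l \<in> Arr" "lsrc s t l = str_tgt s t u" "ltgt s t l = str_src s t v"
    "x = Word (letters u @ [l] @ letters v)" and su: "is_string V Arr s t Rel u" and sv: "is_string V Arr s t Rel v"
    and sx: "is_string V Arr s t Rel x"
    using rc unfolding raw_concat_def by blast
  show ?thesis unfolding raw_concat_def
  proof (intro conjI exI[of _ "lflip l"])
    show "is_string V Arr s t Rel (inv_str x)" by (rule is_string_inv[OF sx])
    show "is_string V Arr s t Rel (inv_str v)" by (rule is_string_inv[OF sv])
    show "is_string V Arr s t Rel (inv_str u)" by (rule is_string_inv[OF su])
    show "fst (lflip l) \<in> Arr" using l by simp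
    show "lsrc s t (lflip l) = str_tgt s t (inv_str v)" using l str_tgt_inv[OF sv] by simp
    show "ltgt s t (lflip l) = str_src s t (inv_str u)" using l str_src_inv[OF su] by simp
    show "inv_str x = Word (letters (inv_str v) @ [lflip l] @ letters (inv_str u))"
      using l by (simp add: flip_lam letters_inv_str)
  qed
qed

lemma split_inv:
  assumes j: "1 \<le> j" "j \<le> length ls"
  shows "split_low s t (rev (map lflip ls)) (Suc (length ls) - j) = inv_str (split_high s t ls j)"
    and "split_high s t (rev (map lflip ls)) (Suc (length ls) - j) = inv_str (split_low s t ls j)"
proof -
  have ne: "ls \<noteq> []" using j by auto
  show "split_low s t (rev (map lflip ls)) (Suc (length ls) - j) = inv_str (split_high s t ls j)"
  proof (cases "j = length ls")
    case True
    then show ?thesis using ne by (simp add: split_low_def split_high_def hd_conv_nth[symmetric] hd_rev last_map)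
  next
    case False
    have "take (length ls - j) (rev (map lflip ls)) = rev (map lflip (drop j ls))"
      using j by (simp add: take_rev drop_map)
    then show ?thesis using False j by (simp add: split_low_def split_high_def flip_lam)
  qed
  show "split_high s t (rev (map lflip ls)) (Suc (length ls) - j) = inv_str (split_low s t ls j)"
  proof (cases "j = 1")
    case True
    then show ?thesis using ne by (simp add: split_low_def split_high_def last_rev hd_map hd_conv_nth)
  next
    case False
    have "drop (Suc (length ls) - j) (rev (map lflip ls)) = rev (map lflip (take (j - 1) ls))"
      using j by (simp add: drop_rev take_map)
    then show ?thesis using False j by (simp add: split_low_def split_high_def flip_lam)
  qed
qed

lemma left_cut:
  assumes E: "\<And>a. a \<in> Arr \<Longrightarrow> s a \<in> V \<and> t a \<in> V"
    and rc: "raw_concat V Arr s t Rel x u v" and j: "1 \<le> j" "j \<le> length (letters u)"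
  shows "split_low s t (letters x) j = split_low s t (letters u) j"
    and "raw_concat V Arr s t Rel (split_high s t (letters x) j) (split_high s t (letters u) j) v"
proof -
  obtain l where l: "fst l \<in> Arr" "lsrc s t l = str_tgt s t u" "ltgt s t l = str_src s t v"
    "x = Word (letters u @ [l] @ letters v)" and su: "is_string V Arr s t Rel u" and sv: "is_string V Arr s t Rel v"
    and sx: "is_string V Arr s t Rel x"
    using rc unfolding raw_concat_def by blast
  have lx: "letters x = letters u @ [l] @ letters v" using l by simp
  have une: "letters u \<noteq> []" using j by auto
  have uW: "u = Word (letters u)" using Word_letters[OF su une] .
  show "split_low s t (letters x) j = split_low s t (letters u) j"
    using lx une j by (auto simp: split_low_def nth_append)
  have hx: "split_high s t (letters x) j = Word (drop j (letters u) @ [l] @ letters v)"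
    using lx j by (simp add: split_high_def)
  show "raw_concat V Arr s t Rel (split_high s t (letters x) j) (split_high s t (letters u) j) v"
    unfolding raw_concat_def hx
  proof (intro conjI exI[of _ l])
    show "is_string V Arr s t Rel (Word (drop j (letters u) @ [l] @ letters v))"
      using is_string_drop[of V Arr s t Rel "letters x" j] sx l(4) lx j by simp
    show "is_string V Arr s t Rel (split_high s t (letters u) j)"
    proof -
      have sw: "is_string V Arr s t Rel (Word (letters u))" using su uW by simp
      show ?thesis using split_strings[OF E sw j] by simp
    qed
    show "is_string V Arr s t Rel v" by (rule sv)
    show "fst l \<in> Arr" by (rule l(1))
    show "lsrc s t l = str_tgt s t (split_high s t (letters u) j)"
    proof -
      have tg: "str_tgt s t u = ltgt s t (last (letters u))" using uW by (metis str_tgt.simps(2))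
      show ?thesis using l(2) tg une j by (auto simp: split_high_def last_drop)
    qed
    show "ltgt s t l = str_src s t v" by (rule l(3))
    show "Word (drop j (letters u) @ [l] @ letters v) = Word (letters (split_high s t (letters u) j) @ [l] @ letters v)"
      using j by (simp add: letters_split_high)
  qed
qed



lemma bounded_len:
  fixes V :: "'v set" and Arr :: "'a set" and s t :: "'a \<Rightarrow> 'v" and Rel :: "('a \<times> 'a) set"
  assumes bg: "brick_gentle TYPE('k::field) V Arr s t Rel" and sw: "is_string V Arr s t Rel w"
  shows "length (letters w) \<le> 2 * card Arr"
proof (rule ccontr)
  assume long: "\<not> length (letters w) \<le> 2 * card Arr"
  define ls where "ls = letters w"
  have ne: "letters w \<noteq> []" using long by auto
  have wW: "w = Word ls" using Word_letters[OF sw ne] ls_def by simp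
  have st: "is_string V Arr s t Rel (Word ls)" using sw wW by simp
  have E: "\<And>a. a \<in> Arr \<Longrightarrow> s a \<in> V \<and> t a \<in> V" using bg_facts(1)[OF bg] by blast
  have fin: "finite Arr" using bg_facts(3)[OF bg] .
  let ?f = "\<lambda>q. ls ! q"
  have sub: "?f ` {0..<length ls} \<subseteq> Arr \<times> UNIV"
  proof
    fix z assume "z \<in> ?f ` {0..<length ls}"
    then obtain q where "q < length ls" "z = ls ! q" by auto
    then show "z \<in> Arr \<times> UNIV" using str_arr[OF st, of q] by (simp add: mem_Times_iff)
  qed
  have "card (?f ` {0..<length ls}) \<le> card (Arr \<times> (UNIV :: bool set))"
    by (rule card_mono[OF _ sub]) (simp add: fin)
  also have "\<dots> = 2 * card Arr" by (simp add: card_cartesian_product)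
  finally have "card (?f ` {0..<length ls}) < length ls" using long ls_def by simp
  then have "\<not> inj_on ?f {0..<length ls}" using card_image by fastforce
  then obtain q1 q2 where q: "q1 < q2" "q2 < length ls" "ls ! q1 = ls ! q2"
    unfolding inj_on_def by (metis atLeastLessThan_iff linorder_neqE_nat)
  define l where "l = ls ! q1"
  define y where "y = take (q2 - Suc q1) (drop (Suc q1) ls)"
  have dec: "ls = take q1 ls @ ([l] @ y @ [l] @ drop (Suc q2) ls)"
  proof -
    have a: "ls = take q1 ls @ ls ! q1 # drop (Suc q1) ls" by (rule id_take_nth_drop) (use q in simp)
    have b: "drop (Suc q1) ls = y @ drop q2 ls"
      unfolding y_def using q by (metis append_take_drop_id drop_drop Suc_leI le_add_diff_inverse2)
    have c: "drop q2 ls = ls ! q2 # drop (Suc q2) ls" using q by (simp add: Cons_nth_drop_Suc)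
    show ?thesis using a b c q l_def by simp
  qed
  let ?P = "adj_ok s t Rel"
  have sl: "successively ?P ls" using st by (simp add: is_string_Word)
  have s2: "successively ?P ([l] @ y @ [l] @ drop (Suc q2) ls)"
    using sl dec by (metis successively_append_iff)
  have s3: "successively ?P ([l] @ y @ [l])"
    using s2 by (metis append_assoc successively_append_iff)
  have sy: "successively ?P y" and hy: "y \<noteq> [] \<Longrightarrow> ?P l (hd y)" and ly: "y \<noteq> [] \<Longrightarrow> ?P (last y) l"
    and ll: "y = [] \<Longrightarrow> ?P l l"
    using s3 by (auto simp: successively_append_iff successively_Cons)
  have setl: "set y \<subseteq> set ls" "l \<in> set ls" unfolding y_def l_def using q
    by (auto dest: in_set_takeD in_set_dropD)
  have arrs: "fst ` set ls \<subseteq> Arr" using st by (simp add: is_string_Word)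
  have lA: "fst l \<in> Arr" using setl arrs by auto
  define u0 where "u0 = (if y = [] then Triv (ltgt s t l) else Word y)"
  have lu: "letters u0 = y" by (simp add: u0_def)
  have su: "is_string V Arr s t Rel u0"
  proof (cases "y = []")
    case True then show ?thesis using lsrc_V[of Arr s V t l] E lA by (simp add: u0_def is_string_Triv ltgt_def split: if_splits)
  next
    case False then show ?thesis using sy setl arrs by (auto simp: u0_def is_string_Word)
  qed
  have sx: "is_string V Arr s t Rel (Word (y @ [l] @ y))"
    unfolding is_string_Word using sy hy ly setl arrs
    by (auto simp: successively_append_iff successively_Cons)
  have rc: "raw_concat V Arr s t Rel (Word (y @ [l] @ y)) u0 u0"
    unfolding raw_concat_def
  proof (intro conjI exI[of _ l])
    show "lsrc s t l = str_tgt s t u0"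
      using ly ll by (cases "y = []") (auto simp: u0_def adj_ok_def)
    show "ltgt s t l = str_src s t u0"
      using hy by (cases "y = []") (auto simp: u0_def adj_ok_def)
  qed (use sx su lA lu in auto)
  show False using CL[OF bg rc] by simp
qed


definition clen :: "('v, 'a) rawstr set \<Rightarrow> nat" where
  "clen c = length (letters (SOME x. x \<in> c))"

lemma len_inv: "length (letters (inv_str x)) = length (letters x)"
  by (simp add: letters_inv_str)

lemma clen_eq: "c \<in> Str V Arr s t Rel \<Longrightarrow> x \<in> c \<Longrightarrow> clen c = length (letters x)"
proof -
  assume c: "c \<in> Str V Arr s t Rel" and x: "x \<in> c"
  have cx: "c = str_class x" using Str_mem_cases(1)[OF c x] .
  have "(SOME y. y \<in> c) \<in> c" using x by (rule someI)
  then have "(SOME y. y \<in> c) = x \<or> (SOME y. y \<in> c) = inv_str x" using cx by (auto simp: str_class_def)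
  then show ?thesis unfolding clen_def by (auto simp: len_inv)
qed

lemma class_self: "x \<in> str_class x" and class_inv: "inv_str x \<in> str_class x"
  by (auto simp: str_class_def)

lemma class_inv_mem: "u \<in> str_class w \<Longrightarrow> inv_str u \<in> str_class w"
  by (auto simp: str_class_def)

lemma raw_concat_len: "raw_concat V Arr s t Rel x u v \<Longrightarrow> length (letters x) = length (letters u) + 1 + length (letters v)"
  unfolding raw_concat_def by auto

lemma raw_concat_strings: "raw_concat V Arr s t Rel x u v \<Longrightarrow>
    is_string V Arr s t Rel x \<and> is_string V Arr s t Rel u \<and> is_string V Arr s t Rel v"
  unfolding raw_concat_def by auto

lemma breaks_info:
  assumes E: "\<And>a. a \<in> Arr \<Longrightarrow> s a \<in> V \<and> t a \<in> V"
    and c: "c \<in> Str V Arr s t Rel" and x: "x \<in> c" and pq: "(p, q) \<in> breaks s t x"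
  shows "p \<in> Str V Arr s t Rel \<and> q \<in> Str V Arr s t Rel \<and> is_concat V Arr s t Rel c q p \<and>
    clen p < clen c \<and> clen q < clen c"
proof -
  obtain j where j: "1 \<le> j" "j \<le> length (letters x)"
    and p: "p = str_class (split_high s t (letters x) j)" and q: "q = str_class (split_low s t (letters x) j)"
    using pq unfolding breaks_def by blast
  have sx: "is_string V Arr s t Rel x" using Str_mem_cases(2)[OF c x] .
  have ne: "letters x \<noteq> []" using j by auto
  have xW: "x = Word (letters x)" using Word_letters[OF sx ne] .
  have sxw: "is_string V Arr s t Rel (Word (letters x))" using sx xW by simp
  note rc = break_concat[OF E sxw j]
  have ss: "is_string V Arr s t Rel (split_low s t (letters x) j)" "is_string V Arr s t Rel (split_high s t (letters x) j)"
    using split_strings[OF E sxw j] by auto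
  have pS: "p \<in> Str V Arr s t Rel" and qS: "q \<in> Str V Arr s t Rel" using ss p q Str_memI by auto
  have rcx: "raw_concat V Arr s t Rel x (split_low s t (letters x) j) (split_high s t (letters x) j)"
    using rc xW by simp
  have ic: "is_concat V Arr s t Rel c q p" unfolding is_concat_def p q
    using x rcx class_self by blast
  have lens: "length (letters x) = length (letters (split_low s t (letters x) j)) + 1 + length (letters (split_high s t (letters x) j))"
    using raw_concat_len[OF rc] by simp
  have hp: "split_high s t (letters x) j \<in> p" using p by (simp add: class_self)
  have hq: "split_low s t (letters x) j \<in> q" using q by (simp add: class_self)
  have "clen p = length (letters (split_high s t (letters x) j))" by (rule clen_eq[OF pS hp])
  moreover have "clen q = length (letters (split_low s t (letters x) j))" by (rule clen_eq[OF qS hq])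
  moreover have "clen c = length (letters x)" using clen_eq[OF c x] .
  ultimately show ?thesis using pS qS ic lens by simp
qed

lemma concat_breaks: "raw_concat V Arr s t Rel x u v \<Longrightarrow> (str_class v, str_class u) \<in> breaks s t x"
proof -
  assume rc: "raw_concat V Arr s t Rel x u v"
  let ?j = "Suc (length (letters u))"
  have h: "1 \<le> ?j \<and> ?j \<le> length (letters x) \<and> split_low s t (letters x) ?j = u \<and> split_high s t (letters x) ?j = v"
    by (rule concat_break[OF rc])
  show ?thesis unfolding breaks_def
  proof (rule CollectI, rule exI[of _ ?j])
    show "(str_class v, str_class u) = (str_class (split_high s t (letters x) ?j), str_class (split_low s t (letters x) ?j)) \<and>
      1 \<le> ?j \<and> ?j \<le> length (letters x)" using h by simp
  qed
qed


lemma inv_in_class: "a \<in> Str V Arr s t Rel \<Longrightarrow> u \<in> a \<Longrightarrow> inv_str u \<in> a"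
  using Str_mem_cases(1) class_inv by metis

theorem part2:
  fixes V :: "'v set" and Arr :: "'a set" and s t :: "'a \<Rightarrow> 'v" and Rel :: "('a \<times> 'a) set"
  assumes bg: "brick_gentle TYPE('k::field) V Arr s t Rel" and cov: "bic_covers V Arr s t Rel B B'"
  shows "\<exists>w\<in>Str V Arr s t Rel. w \<notin> B \<and> B' = insert w B \<and>
               (\<forall>x\<in>w. \<forall>(p, q)\<in>breaks s t x. card ({p, q} \<inter> B) = 1)"
proof -
  define S where "S = Str V Arr s t Rel"
  have E: "\<And>a. a \<in> Arr \<Longrightarrow> s a \<in> V \<and> t a \<in> V" using bg_facts(1)[OF bg] by blast
  have bB: "B \<subseteq> S" and clB: "str_closed V Arr s t Rel B" and clBc: "str_closed V Arr s t Rel (S - B)"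
    and bB': "B' \<subseteq> S" and clB': "str_closed V Arr s t Rel B'" and clBc': "str_closed V Arr s t Rel (S - B')"
    and sub: "B \<subset> B'" and nocov: "\<not> (\<exists>C. biclosed V Arr s t Rel C \<and> B \<subset> C \<and> C \<subset> B')"
    using cov unfolding bic_covers_def biclosed_def S_def by auto
  have clI: "\<And>X a b c. str_closed V Arr s t Rel X \<Longrightarrow> a \<in> X \<Longrightarrow> b \<in> X \<Longrightarrow> c \<in> S \<Longrightarrow>
      is_concat V Arr s t Rel c a b \<Longrightarrow> c \<in> X"
    unfolding str_closed_def S_def by blast
  have bound: "clen c \<le> 2 * card Arr" if c: "c \<in> S" for c
  proof -
    obtain x0 where "is_string V Arr s t Rel x0" "c = str_class x0" using c by (auto simp: S_def Str_def)
    moreover have "clen c = length (letters x0)"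
      using clen_eq[of c V Arr s t Rel x0] c calculation by (simp add: S_def class_self)
    ultimately show ?thesis using bounded_len[OF bg] by simp
  qed
  define good where "good w \<longleftrightarrow> w \<in> B' \<and> w \<notin> B \<and> (\<forall>x\<in>w. \<forall>(p, q)\<in>breaks s t x. p \<in> B \<or> q \<in> B)" for w
  obtain w0 where w0: "w0 \<in> B' - B" and w0min: "\<forall>y. y \<in> B' - B \<longrightarrow> clen w0 \<le> clen y"
    using sub ex_has_least_nat[of "\<lambda>y. y \<in> B' - B"] by blast
  have w0S: "w0 \<in> S" using w0 bB' by auto
  have gw0: "good w0"
    unfolding good_def
  proof (intro conjI)
    show "w0 \<in> B'" "w0 \<notin> B" using w0 by auto
    show "\<forall>x\<in>w0. \<forall>(p, q)\<in>breaks s t x. p \<in> B \<or> q \<in> B"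
    proof
    fix x assume x: "x \<in> w0"
    have "p \<in> B \<or> q \<in> B" if pq: "(p, q) \<in> breaks s t x" for p q
    proof (rule ccontr)
      assume "\<not> (p \<in> B \<or> q \<in> B)"
      then have np: "p \<notin> B" and nq: "q \<notin> B" by auto
      note bi = breaks_info[OF E w0S[unfolded S_def] x pq]
      have "p \<notin> B'" using w0min np bi by force
      moreover have "q \<notin> B'" using w0min nq bi by force
      ultimately have "w0 \<in> S - B'" using clI[OF clBc', of q p w0] bi w0S by (auto simp: S_def)
      then show False using w0 by auto
    qed
    then show "\<forall>(p, q)\<in>breaks s t x. p \<in> B \<or> q \<in> B" by blast
    qed
  qed
  obtain w where gw: "good w" and wmax: "\<forall>y. good y \<longrightarrow> clen y \<le> clen w"
  proof -
    have "\<forall>y. good y \<longrightarrow> clen y < Suc (2 * card Arr)"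
      using bound bB' unfolding good_def by (auto simp: less_Suc_eq_le)
    then show ?thesis using ex_has_greatest_nat[of good w0 clen "Suc (2 * card Arr)"] gw0 that by blast
  qed
  have wB': "w \<in> B'" and wB: "w \<notin> B" and wbr: "\<forall>x\<in>w. \<forall>(p, q)\<in>breaks s t x. p \<in> B \<or> q \<in> B"
    using gw unfolding good_def by auto
  have wS: "w \<in> S" using wB' bB' by auto
  have KC: "\<not> (\<exists>b0\<in>B. \<exists>c\<in>S. c \<notin> B \<and> (is_concat V Arr s t Rel c w b0 \<or> is_concat V Arr s t Rel c b0 w))"
  proof
    assume "\<exists>b0\<in>B. \<exists>c\<in>S. c \<notin> B \<and> (is_concat V Arr s t Rel c w b0 \<or> is_concat V Arr s t Rel c b0 w)"
    define bad where "bad b \<longleftrightarrow> b \<in> B \<and> (\<exists>c\<in>S. c \<notin> B \<and> (is_concat V Arr s t Rel c w b \<or> is_concat V Arr s t Rel c b w))" for b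
    obtain b1 where bb1: "bad b1" and b1min: "\<forall>y. bad y \<longrightarrow> clen b1 \<le> clen y"
      using \<open>\<exists>b0\<in>B. _\<close> ex_has_least_nat[of bad] unfolding bad_def by blast
    obtain c1 where c1: "c1 \<in> S" "c1 \<notin> B" and conc: "is_concat V Arr s t Rel c1 w b1 \<or> is_concat V Arr s t Rel c1 b1 w"
      using bb1 unfolding bad_def by blast
    have b1B: "b1 \<in> B" using bb1 unfolding bad_def by simp
    have b1S: "b1 \<in> S" using b1B bB by auto
    have c1B': "c1 \<in> B'"
      using conc clI[OF clB' wB' _ c1(1), of b1] clI[OF clB' _ wB' c1(1), of b1] b1B sub by auto
    have roles: "\<exists>u v. raw_concat V Arr s t Rel x u v \<and> ((u \<in> w \<and> v \<in> b1) \<or> (u \<in> b1 \<and> v \<in> w))"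
      if x: "x \<in> c1" for x
    proof -
      obtain x0 u v where x0: "x0 \<in> c1" and rc: "raw_concat V Arr s t Rel x0 u v"
        and r: "(u \<in> w \<and> v \<in> b1) \<or> (u \<in> b1 \<and> v \<in> w)"
        using conc unfolding is_concat_def by blast
      have "c1 = str_class x0" using Str_mem_cases(1)[of c1 V Arr s t Rel x0] c1 x0 by (simp add: S_def)
      then have "x = x0 \<or> x = inv_str x0" using x by (auto simp: str_class_def)
      then show ?thesis
      proof
        assume "x = x0" then show ?thesis using rc r by blast
      next
        assume xi: "x = inv_str x0"
        have rc': "raw_concat V Arr s t Rel x (inv_str v) (inv_str u)" using raw_concat_inv[OF rc] xi by simp
        have "(inv_str v \<in> w \<and> inv_str u \<in> b1) \<or> (inv_str v \<in> b1 \<and> inv_str u \<in> w)"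
          using r inv_in_class[of w V Arr s t Rel] inv_in_class[of b1 V Arr s t Rel] wS b1S by (auto simp: S_def)
        then show ?thesis using rc' by blast
      qed
    qed
    have LC: "str_class (split_high s t (letters x) j) \<in> B \<or> str_class (split_low s t (letters x) j) \<in> B"
      if rc: "raw_concat V Arr s t Rel x u v" and r: "(u \<in> w \<and> v \<in> b1) \<or> (u \<in> b1 \<and> v \<in> w)"
        and j: "1 \<le> j" "j \<le> length (letters u)" for x u v j
    proof -
      define U where "U = letters u"
      define u1 where "u1 = split_low s t U j"
      define u2 where "u2 = split_high s t U j"
      define H where "H = split_high s t (letters x) j"
      have lc1: "split_low s t (letters x) j = u1" using left_cut(1)[OF E rc j] by (simp add: u1_def U_def)
      have lc2: "raw_concat V Arr s t Rel H u2 v" using left_cut(2)[OF E rc j] by (simp add: u2_def U_def H_def)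
      have su: "is_string V Arr s t Rel u" using raw_concat_strings[OF rc] by simp
      have une: "U \<noteq> []" using j U_def by auto
      have uW: "u = Word U" unfolding U_def by (rule Word_letters[OF su]) (use une U_def in simp)
      have sU: "is_string V Arr s t Rel (Word U)" using su uW by simp
      have jU: "j \<le> length U" using j by (simp add: U_def)
      have "raw_concat V Arr s t Rel (Word U) u1 u2" unfolding u1_def u2_def by (rule break_concat[OF E sU j(1) jU])
      then have ruu: "raw_concat V Arr s t Rel u u1 u2" using uW by simp
      have ss: "is_string V Arr s t Rel u1" "is_string V Arr s t Rel u2" "is_string V Arr s t Rel H"
        using raw_concat_strings[OF ruu] raw_concat_strings[OF lc2] by auto
      have cS: "str_class u1 \<in> S" "str_class u2 \<in> S" "str_class H \<in> S" using ss Str_memI by (auto simp: S_def)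
      have brk: "(str_class u2, str_class u1) \<in> breaks s t u" by (rule concat_breaks[OF ruu])
      show ?thesis
      proof (cases "u \<in> w \<and> v \<in> b1")
        case True
        have "\<forall>(p, q)\<in>breaks s t u. p \<in> B \<or> q \<in> B" using wbr True by blast
        then have "str_class u2 \<in> B \<or> str_class u1 \<in> B" using brk by blast
        then show ?thesis
        proof
          assume u2B: "str_class u2 \<in> B"
          have "is_concat V Arr s t Rel (str_class H) (str_class u2) b1"
            unfolding is_concat_def
            by (rule bexI[of _ H], rule bexI[of _ u2], rule bexI[of _ v]) (use lc2 True in \<open>simp_all add: class_self\<close>)
          then have "str_class H \<in> B" using clI[OF clB u2B b1B cS(3)] by simp
          then show ?thesis by (simp add: H_def)
        next
          assume "str_class u1 \<in> B" then show ?thesis using lc1 by simp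
        qed
      next
        case False
        then have r2: "u \<in> b1" "v \<in> w" using r by auto
        have b1u: "b1 = str_class u" using Str_mem_cases(1)[of b1 V Arr s t Rel u] b1S r2 by (simp add: S_def)
        have "str_class u1 \<in> B \<or> str_class u2 \<in> B"
        proof (rule ccontr)
          assume "\<not> ?thesis"
          then have "str_class u1 \<in> S - B" "str_class u2 \<in> S - B" using cS by auto
          moreover have "is_concat V Arr s t Rel b1 (str_class u1) (str_class u2)"
            unfolding is_concat_def
            by (rule bexI[of _ u], rule bexI[of _ u1], rule bexI[of _ u2]) (use ruu r2 in \<open>simp_all add: class_self\<close>)
          ultimately have "b1 \<in> S - B" using clI[OF clBc, of "str_class u1" "str_class u2" b1] b1S by simp
          then show False using b1B by simp
        qed
        then show ?thesis
        proof
          assume "str_class u1 \<in> B" then show ?thesis using lc1 by simp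
        next
          assume u2B: "str_class u2 \<in> B"
          show ?thesis
          proof (rule ccontr)
            assume "\<not> ?thesis"
            then have HB: "str_class H \<notin> B" by (simp add: H_def)
            have icw: "is_concat V Arr s t Rel (str_class H) (str_class u2) w"
              unfolding is_concat_def
              by (rule bexI[of _ H], rule bexI[of _ u2], rule bexI[of _ v]) (use lc2 r2 in \<open>simp_all add: class_self\<close>)
            have "bad (str_class u2)" unfolding bad_def using u2B HB cS(3) icw by blast
            then have "clen b1 \<le> clen (str_class u2)" using b1min by blast
            moreover have "clen (str_class u2) = length (letters u2)"
              using clen_eq[of "str_class u2" V Arr s t Rel u2] cS(2) by (simp add: S_def class_self)
            moreover have "clen b1 = length U" using clen_eq[of b1 V Arr s t Rel u] b1S r2 by (simp add: S_def U_def)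
            moreover have "length (letters u2) < length U" using j une by (simp add: u2_def split_high_def)
            ultimately show False by simp
          qed
        qed
      qed
    qed
    have gc1: "good c1"
      unfolding good_def
    proof (intro conjI)
      show "c1 \<in> B'" "c1 \<notin> B" using c1B' c1 by auto
      show "\<forall>x\<in>c1. \<forall>(p, q)\<in>breaks s t x. p \<in> B \<or> q \<in> B"
      proof
      fix x assume x: "x \<in> c1"
      obtain u v where rc: "raw_concat V Arr s t Rel x u v" and r: "(u \<in> w \<and> v \<in> b1) \<or> (u \<in> b1 \<and> v \<in> w)"
        using roles[OF x] by blast
      have "p \<in> B \<or> q \<in> B" if pq: "(p, q) \<in> breaks s t x" for p q
      proof -
        obtain j where j: "1 \<le> j" "j \<le> length (letters x)"
          and p: "p = str_class (split_high s t (letters x) j)" and q: "q = str_class (split_low s t (letters x) j)"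
          using pq unfolding breaks_def by blast
        have lenx: "length (letters x) = length (letters u) + 1 + length (letters v)" by (rule raw_concat_len[OF rc])
        have "p \<in> B \<or> q \<in> B"
        proof (cases "j \<le> length (letters u)")
          case True then show ?thesis using LC[OF rc r j(1) True] p q by simp
        next
          case False
          show ?thesis
          proof (cases "j = Suc (length (letters u))")
            case True
            have "split_low s t (letters x) j = u" "split_high s t (letters x) j = v"
              using concat_break[OF rc] True by auto
            then have "p = str_class v" "q = str_class u" using p q by auto
            moreover have "str_class v = b1" if "v \<in> b1"
              using Str_mem_cases(1)[of b1 V Arr s t Rel v] b1S that by (simp add: S_def)
            moreover have "str_class u = b1" if "u \<in> b1"
              using Str_mem_cases(1)[of b1 V Arr s t Rel u] b1S that by (simp add: S_def)
            ultimately show ?thesis using r b1B by auto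
          next
            case False2: False
            define n where "n = length (letters x)"
            define j' where "j' = Suc n - j"
            have rc': "raw_concat V Arr s t Rel (inv_str x) (inv_str v) (inv_str u)" by (rule raw_concat_inv[OF rc])
            have r': "(inv_str v \<in> w \<and> inv_str u \<in> b1) \<or> (inv_str v \<in> b1 \<and> inv_str u \<in> w)"
              using r inv_in_class[of w V Arr s t Rel] inv_in_class[of b1 V Arr s t Rel] wS b1S by (auto simp: S_def)
            have j': "1 \<le> j'" "j' \<le> length (letters (inv_str v))"
              using j False False2 lenx by (auto simp: j'_def n_def len_inv)
            have lx': "letters (inv_str x) = rev (map lflip (letters x))" by (rule letters_inv_str)
            have e1: "split_low s t (letters (inv_str x)) j' = inv_str (split_high s t (letters x) j)"
              unfolding lx' j'_def n_def by (rule split_inv(1)[OF j])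
            have e2: "split_high s t (letters (inv_str x)) j' = inv_str (split_low s t (letters x) j)"
              unfolding lx' j'_def n_def by (rule split_inv(2)[OF j])
            show ?thesis using LC[OF rc' r' j'] e1 e2 p q by auto
          qed
        qed
        then show ?thesis .
      qed
      then show "\<forall>(p, q)\<in>breaks s t x. p \<in> B \<or> q \<in> B" by blast
      qed
    qed
    have "clen c1 \<le> clen w" using wmax gc1 by blast
    moreover have "clen w < clen c1"
    proof -
      obtain x0 u v where x0: "x0 \<in> c1" and rc: "raw_concat V Arr s t Rel x0 u v"
        and r: "(u \<in> w \<and> v \<in> b1) \<or> (u \<in> b1 \<and> v \<in> w)"
        using conc unfolding is_concat_def by blast
      have "clen c1 = length (letters x0)" using clen_eq[of c1 V Arr s t Rel x0] c1 x0 by (simp add: S_def)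
      moreover have "clen w = length (letters u) \<or> clen w = length (letters v)"
        using r clen_eq[of w V Arr s t Rel] wS by (auto simp: S_def)
      ultimately show ?thesis using raw_concat_len[OF rc] by auto
    qed
    ultimately show False by simp
  qed
  define C where "C = insert w B"
  have CS: "C \<subseteq> S" using wS bB by (auto simp: C_def)
  have clC: "str_closed V Arr s t Rel C"
    unfolding str_closed_def
  proof (intro ballI impI)
    fix a b c assume a: "a \<in> C" and b: "b \<in> C" and c: "c \<in> Str V Arr s t Rel" and ic: "is_concat V Arr s t Rel c a b"
    have cS: "c \<in> S" using c by (simp add: S_def)
    show "c \<in> C"
    proof (cases "a = w")
      case aw: True
      show ?thesis
      proof (cases "b = w")
        case True
        then show ?thesis using no_self_concat[OF bg wS[unfolded S_def]] ic aw by simp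
      next
        case False
        then have "b \<in> B" using b by (simp add: C_def)
        then show ?thesis using KC cS ic aw by (auto simp: C_def)
      qed
    next
      case False
      then have aB: "a \<in> B" using a by (simp add: C_def)
      show ?thesis
      proof (cases "b = w")
        case True
        then show ?thesis using KC cS ic aB by (auto simp: C_def)
      next
        case False
        then have "b \<in> B" using b by (simp add: C_def)
        then show ?thesis using clI[OF clB aB _ cS ic] by (simp add: C_def)
      qed
    qed
  qed
  have clCc: "str_closed V Arr s t Rel (Str V Arr s t Rel - C)"
    unfolding str_closed_def
  proof (intro ballI impI)
    fix a b c assume a: "a \<in> Str V Arr s t Rel - C" and b: "b \<in> Str V Arr s t Rel - C"
      and c: "c \<in> Str V Arr s t Rel" and ic: "is_concat V Arr s t Rel c a b"
    have cS: "c \<in> S" using c by (simp add: S_def)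
    have "c \<in> S - B" using clI[OF clBc _ _ cS ic] a b by (auto simp: C_def S_def)
    moreover have "c \<noteq> w"
    proof
      assume cw: "c = w"
      obtain x u v where x: "x \<in> w" and u: "u \<in> a" and v: "v \<in> b" and rc: "raw_concat V Arr s t Rel x u v"
        using ic cw unfolding is_concat_def by blast
      have "(str_class v, str_class u) \<in> breaks s t x" by (rule concat_breaks[OF rc])
      moreover have "str_class u = a" using Str_mem_cases(1)[of a V Arr s t Rel u] a u by simp
      moreover have "str_class v = b" using Str_mem_cases(1)[of b V Arr s t Rel v] b v by simp
      ultimately have "b \<in> B \<or> a \<in> B" using wbr x by blast
      then show False using a b by (auto simp: C_def)
    qed
    ultimately show "c \<in> Str V Arr s t Rel - C" by (auto simp: C_def S_def)
  qed
  have bC: "biclosed V Arr s t Rel C" unfolding biclosed_def using CS clC clCc by (simp add: S_def)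
  have BC: "B \<subset> C" using wB by (auto simp: C_def)
  have CB': "C \<subseteq> B'" using wB' sub by (auto simp: C_def)
  have CeqB': "B' = C" using nocov bC BC CB' by blast
  show ?thesis
  proof (intro bexI conjI)
    show "w \<in> Str V Arr s t Rel" using wS by (simp add: S_def)
    show "w \<notin> B" by (rule wB)
    show "B' = insert w B" using CeqB' by (simp add: C_def)
    show "\<forall>x\<in>w. \<forall>(p, q)\<in>breaks s t x. card ({p, q} \<inter> B) = 1"
    proof (intro ballI, clarify)
      fix x p q assume x: "x \<in> w" and pq: "(p, q) \<in> breaks s t x"
      note bi = breaks_info[OF E wS[unfolded S_def] x pq]
      have one: "p \<in> B \<or> q \<in> B" using wbr x pq by blast
      have notboth: "\<not> (p \<in> B \<and> q \<in> B)"
      proof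
        assume "p \<in> B \<and> q \<in> B"
        then have "w \<in> B" using clI[OF clB, of q p w] bi wS by auto
        then show False using wB by simp
      qed
      show "card ({p, q} \<inter> B) = 1"
      proof (cases "p \<in> B")
        case True
        then have "q \<notin> B" using notboth by simp
        then have "{p, q} \<inter> B = {p}" using True by auto
        then show ?thesis by simp
      next
        case False
        then have "q \<in> B" using one by simp
        then have "{p, q} \<inter> B = {q}" using False by auto
        then show ?thesis by simp
      qed
    qed
  qed
qed


theorem lemma5p4:
  fixes V :: "'v set" and Arr :: "'a set" and s t :: "'a \<Rightarrow> 'v" and Rel :: "('a \<times> 'a) set"
  assumes "brick_gentle TYPE('k::field) V Arr s t Rel"
  shows "(\<forall>w\<in>Str V Arr s t Rel. str_closure V Arr s t Rel {w} = {w}) \<and>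
         (\<forall>B B'. bic_covers V Arr s t Rel B B' \<longrightarrow>
            (\<exists>w\<in>Str V Arr s t Rel. w \<notin> B \<and> B' = insert w B \<and>
               (\<forall>x\<in>w. \<forall>(p, q)\<in>breaks s t x. card ({p, q} \<inter> B) = 1)))"
  using part1[OF assms] part2[OF assms] by blast

end
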